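(* Let $G=H(T,C)$ be a generalized Halin graph such that $\kappa_{LLY}(u,v)>0$ for every edge $\{u,v\}$ of $G$. Let $x$ be a vertex of $T$ of maximum degree $D(T)$, and let $A_1,\dots,A_c$ be the connected components of $T-\{x\}$, labeled in clockwise order around $x$ according to the planar embedding of $T$, with indices taken cyclically ($A_0=A_c$, $A_{c+1}=A_1$). If $|A_i\cap V(C)|\ge 2$ for some $i\in\{1,\dots,c\}$, then $|A_{i+1}\cap V(C)|=|A_{i-1}\cap V(C)|=1$.
   Context: All graphs are finite, simple, undirected and connected; $d(\cdot,\cdot)$ is the shortest-path distance and $d_v$ the degree of $v$. Lin-Lu-Yau curvature: for a vertex $v$ and $\alpha\in[0,1]$ let $m_v^\alpha(v)=\alpha$, $m_v^\alpha(u)=(1-\alpha)/d_v$ for neighbors $u$ of $v$, and $0$ elsewhere. For probability measures $m_1,m_2$, $W(m_1,m_2)=\inf_\pi\sum_{u,w}\pi(u,w)d(u,w)$ over couplings $\pi$ of $m_1,m_2$. For an edge $\{u,v\}$, $\kappa_\alpha(u,v)=1-W(m_u^\alpha,m_v^\alpha)$ and $\kappa_{LLY}(u,v)=\lim_{\alpha\to1}\kappa_\alpha(u,v)/(1-\alpha)$. A generalized Halin graph $H(T,C)$ is obtained from a tree $T$ with maximum degree $D(T)\ge3$ together with a planar embedding, by adding a cycle $C$ through all leaves of $T$ in the cyclic order in which they appear in the embedding. The vertices of $C$ are exactly the leaves of $T$. *)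

theory Defs
  imports Complex_Main
begin

definition walk_of_len :: "('a \<Rightarrow> 'a \<Rightarrow> bool) \<Rightarrow> nat \<Rightarrow> 'a \<Rightarrow> 'a \<Rightarrow> bool" where
  "walk_of_len E n u v \<longleftrightarrow>
     (\<exists>p::nat \<Rightarrow> 'a. p 0 = u \<and> p n = v \<and> (\<forall>i<n. E (p i) (p (Suc i))))"

definition gdist :: "('a \<Rightarrow> 'a \<Rightarrow> bool) \<Rightarrow> 'a \<Rightarrow> 'a \<Rightarrow> nat" where
  "gdist E u v = (LEAST n. walk_of_len E n u v)"

definition simple_graph :: "'a set \<Rightarrow> ('a \<Rightarrow> 'a \<Rightarrow> bool) \<Rightarrow> bool" where
  "simple_graph V E \<longleftrightarrow> finite V \<and>
     (\<forall>u v. E u v \<longrightarrow> u \<in> V \<and> v \<in> V \<and> u \<noteq> v \<and> E v u)"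

definition connected_graph :: "'a set \<Rightarrow> ('a \<Rightarrow> 'a \<Rightarrow> bool) \<Rightarrow> bool" where
  "connected_graph V E \<longleftrightarrow> V \<noteq> {} \<and> (\<forall>u\<in>V. \<forall>v\<in>V. \<exists>n. walk_of_len E n u v)"

definition acyclic_graph :: "('a \<Rightarrow> 'a \<Rightarrow> bool) \<Rightarrow> bool" where
  "acyclic_graph E \<longleftrightarrow>
     \<not> (\<exists>n (p::nat \<Rightarrow> 'a). 3 \<le> n \<and> inj_on p {..<n} \<and> (\<forall>i<n. E (p i) (p (Suc i mod n))))"

definition is_tree :: "'a set \<Rightarrow> ('a \<Rightarrow> 'a \<Rightarrow> bool) \<Rightarrow> bool" where
  "is_tree V E \<longleftrightarrow> simple_graph V E \<and> connected_graph V E \<and> acyclic_graph E"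

definition nbrs :: "('a \<Rightarrow> 'a \<Rightarrow> bool) \<Rightarrow> 'a \<Rightarrow> 'a set" where
  "nbrs E v = {w. E v w}"

definition deg :: "('a \<Rightarrow> 'a \<Rightarrow> bool) \<Rightarrow> 'a \<Rightarrow> nat" where
  "deg E v = card (nbrs E v)"

definition max_deg :: "'a set \<Rightarrow> ('a \<Rightarrow> 'a \<Rightarrow> bool) \<Rightarrow> nat" where
  "max_deg V E = Max (deg E ` V)"

definition leaves :: "'a set \<Rightarrow> ('a \<Rightarrow> 'a \<Rightarrow> bool) \<Rightarrow> 'a set" where
  "leaves V E = {v \<in> V. deg E v = 1}"

text \<open>A rotation system: at each vertex v, rot v is a cyclic permutation of the neighbours
  of v (the clockwise order of the edges around v in the embedding). For a tree every
  rotation system is a planar embedding.\<close>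
definition rotation_system :: "'a set \<Rightarrow> ('a \<Rightarrow> 'a \<Rightarrow> bool) \<Rightarrow> ('a \<Rightarrow> 'a \<Rightarrow> 'a) \<Rightarrow> bool" where
  "rotation_system V E rot \<longleftrightarrow>
     (\<forall>v\<in>V. bij_betw (rot v) (nbrs E v) (nbrs E v) \<and>
        (\<forall>u\<in>nbrs E v. \<forall>w\<in>nbrs E v. \<exists>k. (rot v ^^ k) u = w))"

text \<open>Face-tracing successor on darts (directed edges).\<close>
definition face_next :: "('a \<Rightarrow> 'a \<Rightarrow> 'a) \<Rightarrow> 'a \<times> 'a \<Rightarrow> 'a \<times> 'a" where
  "face_next rot d = (snd d, rot (snd d) (fst d))"

text \<open>l' is the leaf following the leaf l along the boundary walk of the (unique) face
  of the embedded tree, i.e. the next leaf in the cyclic order of the embedding.\<close>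
definition cyc_adj :: "'a set \<Rightarrow> ('a \<Rightarrow> 'a \<Rightarrow> bool) \<Rightarrow> ('a \<Rightarrow> 'a \<Rightarrow> 'a) \<Rightarrow> 'a \<Rightarrow> 'a \<Rightarrow> bool" where
  "cyc_adj V T rot l l' \<longleftrightarrow> l \<in> leaves V T \<and> l' \<in> leaves V T \<and>
     (\<exists>p k. T l p \<and> 0 < k \<and> snd ((face_next rot ^^ k) (l, p)) = l' \<and>
        (\<forall>j. 0 < j \<and> j < k \<longrightarrow> snd ((face_next rot ^^ j) (l, p)) \<notin> leaves V T))"

definition halin_adj :: "'a set \<Rightarrow> ('a \<Rightarrow> 'a \<Rightarrow> bool) \<Rightarrow> ('a \<Rightarrow> 'a \<Rightarrow> 'a) \<Rightarrow> 'a \<Rightarrow> 'a \<Rightarrow> bool" where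
  "halin_adj V T rot u v \<longleftrightarrow> T u v \<or> cyc_adj V T rot u v \<or> cyc_adj V T rot v u"

definition gen_halin :: "'a set \<Rightarrow> ('a \<Rightarrow> 'a \<Rightarrow> bool) \<Rightarrow> ('a \<Rightarrow> 'a \<Rightarrow> 'a) \<Rightarrow> bool" where
  "gen_halin V T rot \<longleftrightarrow> is_tree V T \<and> 3 \<le> max_deg V T \<and> rotation_system V T rot"

definition lly_measure :: "('a \<Rightarrow> 'a \<Rightarrow> bool) \<Rightarrow> real \<Rightarrow> 'a \<Rightarrow> 'a \<Rightarrow> real" where
  "lly_measure E \<alpha> v w =
     (if w = v then \<alpha> else if E v w then (1 - \<alpha>) / real (deg E v) else 0)"

definition couplings :: "'a set \<Rightarrow> ('a \<Rightarrow> real) \<Rightarrow> ('a \<Rightarrow> real) \<Rightarrow> ('a \<Rightarrow> 'a \<Rightarrow> real) set" where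
  "couplings V m1 m2 = {\<pi>. (\<forall>a b. 0 \<le> \<pi> a b) \<and>
     (\<forall>a\<in>V. (\<Sum>b\<in>V. \<pi> a b) = m1 a) \<and> (\<forall>b\<in>V. (\<Sum>a\<in>V. \<pi> a b) = m2 b)}"

definition wasserstein :: "'a set \<Rightarrow> ('a \<Rightarrow> 'a \<Rightarrow> bool) \<Rightarrow> ('a \<Rightarrow> real) \<Rightarrow> ('a \<Rightarrow> real) \<Rightarrow> real" where
  "wasserstein V E m1 m2 =
     Inf {(\<Sum>a\<in>V. \<Sum>b\<in>V. \<pi> a b * real (gdist E a b)) | \<pi>. \<pi> \<in> couplings V m1 m2}"

definition kappa_alpha :: "'a set \<Rightarrow> ('a \<Rightarrow> 'a \<Rightarrow> bool) \<Rightarrow> real \<Rightarrow> 'a \<Rightarrow> 'a \<Rightarrow> real" where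
  "kappa_alpha V E \<alpha> u v = 1 - wasserstein V E (lly_measure E \<alpha> u) (lly_measure E \<alpha> v)"

definition kappa_lly :: "'a set \<Rightarrow> ('a \<Rightarrow> 'a \<Rightarrow> bool) \<Rightarrow> 'a \<Rightarrow> 'a \<Rightarrow> real" where
  "kappa_lly V E u v = Lim (at_left 1) (\<lambda>\<alpha>. kappa_alpha V E \<alpha> u v / (1 - \<alpha>))"

definition tcomp :: "'a set \<Rightarrow> ('a \<Rightarrow> 'a \<Rightarrow> bool) \<Rightarrow> 'a \<Rightarrow> 'a \<Rightarrow> 'a set" where
  "tcomp V T x y = {z \<in> V - {x}. \<exists>n. walk_of_len (\<lambda>a b. T a b \<and> a \<noteq> x \<and> b \<noteq> x) n y z}"

end

theory Submission
  imports Defs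
begin
lemma walk_relpowp: "walk_of_len E n u v \<longleftrightarrow> (E ^^ n) u v"
proof (induction n arbitrary: v)
  case 0
  then show ?case by (auto simp: walk_of_len_def)
next
  case (Suc n)
  show ?case
  proof
    assume "walk_of_len E (Suc n) u v"
    then obtain p where p: "p 0 = u" "p (Suc n) = v" "\<forall>i<Suc n. E (p i) (p (Suc i))"
      unfolding walk_of_len_def by blast
    have "walk_of_len E n u (p n)" unfolding walk_of_len_def using p by auto
    then have "(E ^^ n) u (p n)" using Suc by blast
    then show "(E ^^ Suc n) u v" using p by (auto intro: relpowp_Suc_I)
  next
    assume "(E ^^ Suc n) u v"
    then obtain w where w: "(E ^^ n) u w" "E w v" by (rule relpowp_Suc_E)
    then obtain p where p: "p 0 = u" "p n = w" "\<forall>i<n. E (p i) (p (Suc i))"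
      using Suc unfolding walk_of_len_def by blast
    define q where "q = p(Suc n := v)"
    have "q 0 = u" "q (Suc n) = v" using p by (auto simp: q_def)
    moreover have "\<forall>i<Suc n. E (q i) (q (Suc i))"
    proof (intro allI impI)
      fix i assume "i < Suc n"
      then consider "i < n" | "i = n" by linarith
      then show "E (q i) (q (Suc i))"
        by cases (use p w in \<open>auto simp: q_def\<close>)
    qed
    ultimately show "walk_of_len E (Suc n) u v" unfolding walk_of_len_def by blast
  qed
qed

lemma walk_rtranclp: "(\<exists>n. walk_of_len E n u v) \<longleftrightarrow> E\<^sup>*\<^sup>* u v"
  by (simp add: walk_relpowp rtranclp_power)

definition av :: "('a \<Rightarrow> 'a \<Rightarrow> bool) \<Rightarrow> 'a set \<Rightarrow> 'a \<Rightarrow> 'a \<Rightarrow> bool" where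
  "av T S a b \<longleftrightarrow> T a b \<and> a \<notin> S \<and> b \<notin> S"

lemma tcomp_alt: "tcomp V T x y = {z \<in> V - {x}. (av T {x})\<^sup>*\<^sup>* y z}"
proof -
  have e: "(\<lambda>a b. T a b \<and> a \<noteq> x \<and> b \<noteq> x) = av T {x}" by (auto simp: av_def fun_eq_iff)
  show ?thesis unfolding tcomp_def e walk_rtranclp ..
qed

lemma shortest_walk_inj:
  assumes "walk_of_len E n a c" and min: "\<And>m. walk_of_len E m a c \<Longrightarrow> n \<le> m"
  obtains p where "p 0 = a" "p n = c" "\<forall>i<n. E (p i) (p (Suc i))" "inj_on p {..n}"
proof -
  obtain p where p: "p 0 = a" "p n = c" "\<forall>i<n. E (p i) (p (Suc i))"
    using assms(1) unfolding walk_of_len_def by blast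
  have "inj_on p {..n}"
  proof (rule ccontr)
    assume "\<not> inj_on p {..n}"
    then obtain i j where ij: "i \<le> n" "j \<le> n" "p i = p j" "i \<noteq> j" unfolding inj_on_def by auto
    then obtain i j where ij: "i < j" "j \<le> n" "p i = p j"
      by (metis linorder_neqE_nat)
    define q where "q k = (if k \<le> i then p k else p (k + (j - i)))" for k
    have "walk_of_len E (n - (j - i)) a c"
      unfolding walk_of_len_def
    proof (intro exI conjI allI impI)
      show "q 0 = a" using p by (simp add: q_def)
      show "q (n - (j - i)) = c"
      proof (cases "n - (j - i) \<le> i")
        case True
        then have "j = n" using ij by linarith
        then show ?thesis using True ij p by (simp add: q_def)
      next
        case False
        then show ?thesis using ij p by (simp add: q_def)
      qed
      fix k assume k: "k < n - (j - i)"
      consider "k < i" | "k = i" | "k > i" by linarith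
      then show "E (q k) (q (Suc k))"
      proof cases
        case 1 then show ?thesis using p ij by (simp add: q_def)
      next
        case 2
        have "E (p j) (p (Suc j))" using p ij k 2 by auto
        then show ?thesis using 2 ij by (simp add: q_def)
      next
        case 3
        have "E (p (k + (j - i))) (p (Suc (k + (j - i))))" using p ij k by auto
        then show ?thesis using 3 by (simp add: q_def)
      qed
    qed
    from min[OF this] ij show False by linarith
  qed
  then show ?thesis using p that by blast
qed

lemma tree_lemma:
  assumes sg: "simple_graph V T" and ac: "acyclic_graph T"
    and ba: "T b a" and bc: "T b c" and ac_ne: "a \<noteq> c"
  shows "\<not> (av T {b})\<^sup>*\<^sup>* a c"
proof
  assume "(av T {b})\<^sup>*\<^sup>* a c"
  then have ex: "\<exists>n. walk_of_len (av T {b}) n a c" by (simp add: walk_rtranclp)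
  define n where "n = (LEAST n. walk_of_len (av T {b}) n a c)"
  have wn: "walk_of_len (av T {b}) n a c" unfolding n_def using ex by (rule LeastI_ex)
  have mn: "\<And>m. walk_of_len (av T {b}) m a c \<Longrightarrow> n \<le> m" unfolding n_def by (rule Least_le)
  obtain p where p: "p 0 = a" "p n = c" "\<forall>i<n. av T {b} (p i) (p (Suc i))" "inj_on p {..n}"
    using shortest_walk_inj[OF wn mn] by blast
  have n1: "n \<ge> 1" using p ac_ne by (cases n) auto
  have pb: "p k \<noteq> b" if "k \<le> n" for k
  proof (cases "k < n")
    case True then show ?thesis using p(3) by (auto simp: av_def)
  next
    case False
    then have "k = n" using that by simp
    then have "av T {b} (p (n - 1)) (p k)" using p(3)[rule_format, of "n-1"] n1 by simp
    then show ?thesis by (auto simp: av_def)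
  qed
  define q where "q k = (if k \<le> n then p k else b)" for k
  have sym: "\<And>u v. T u v \<Longrightarrow> T v u" using sg by (auto simp: simple_graph_def)
  have "3 \<le> n + 2" using n1 by simp
  moreover have "inj_on q {..<n+2}"
    unfolding inj_on_def
  proof (intro ballI impI)
    fix k1 k2 assume k: "k1 \<in> {..<n+2}" "k2 \<in> {..<n+2}" "q k1 = q k2"
    show "k1 = k2"
    proof (cases "k1 \<le> n"; cases "k2 \<le> n")
      assume "k1 \<le> n" "k2 \<le> n" then show ?thesis using k p(4) by (auto simp: q_def inj_on_def)
    next
      assume "k1 \<le> n" "\<not> k2 \<le> n" then show ?thesis using k pb[of k1] by (auto simp: q_def)
    next
      assume "\<not> k1 \<le> n" "k2 \<le> n" then show ?thesis using k pb[of k2] by (auto simp: q_def)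
    next
      assume "\<not> k1 \<le> n" "\<not> k2 \<le> n" then show ?thesis using k by auto
    qed
  qed
  moreover have "\<forall>i<n+2. T (q i) (q (Suc i mod (n+2)))"
  proof (intro allI impI)
    fix i assume i: "i < n + 2"
    consider "i < n" | "i = n" | "i = n + 1" using i by linarith
    then show "T (q i) (q (Suc i mod (n+2)))"
    proof cases
      case 1 then show ?thesis using p(3) by (auto simp: q_def av_def)
    next
      case 2 then show ?thesis using p(2) bc sym by (auto simp: q_def)
    next
      case 3
      have "Suc i mod (n+2) = 0" using 3 by simp
      then show ?thesis using 3 p(1) ba by (simp add: q_def)
    qed
  qed
  ultimately show False using ac unfolding acyclic_graph_def by blast
qed

locale htree =
  fixes V :: "'a set" and T :: "'a \<Rightarrow> 'a \<Rightarrow> bool" and rot :: "'a \<Rightarrow> 'a \<Rightarrow> 'a"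
  assumes tree: "is_tree V T" and rs: "rotation_system V T rot" and md: "3 \<le> max_deg V T"
begin

lemma finV: "finite V" using tree by (auto simp: is_tree_def simple_graph_def)
lemma symT: "T a b \<Longrightarrow> T b a" using tree by (auto simp: is_tree_def simple_graph_def)
lemma inV: "T a b \<Longrightarrow> a \<in> V \<and> b \<in> V" using tree by (auto simp: is_tree_def simple_graph_def)
lemma irrT: "T a b \<Longrightarrow> a \<noteq> b" using tree by (auto simp: is_tree_def simple_graph_def)
lemma sg: "simple_graph V T" using tree by (auto simp: is_tree_def)
lemma acyc: "acyclic_graph T" using tree by (auto simp: is_tree_def)
lemma conn: "a \<in> V \<Longrightarrow> b \<in> V \<Longrightarrow> T\<^sup>*\<^sup>* a b"
  using tree by (auto simp: is_tree_def connected_graph_def walk_rtranclp[symmetric])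
lemma Vne: "V \<noteq> {}" using tree by (auto simp: is_tree_def connected_graph_def)

lemma nbrs_sub: "nbrs T v \<subseteq> V" using inV by (auto simp: nbrs_def)
lemma fin_nbrs: "finite (nbrs T v)" using nbrs_sub finV finite_subset by blast

lemma TL: "T b a \<Longrightarrow> T b c \<Longrightarrow> a \<noteq> c \<Longrightarrow> \<not> (av T {b})\<^sup>*\<^sup>* a c"
  using tree_lemma[OF sg acyc] by blast

lemma av_sym: "(av T S)\<^sup>*\<^sup>* a b \<Longrightarrow> (av T S)\<^sup>*\<^sup>* b a"
proof -
  have "symp (av T S)" using symT by (auto simp: symp_def av_def)
  then show "(av T S)\<^sup>*\<^sup>* a b \<Longrightarrow> (av T S)\<^sup>*\<^sup>* b a"
    by (meson sympD symp_rtranclp)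
qed

lemma av_notin: "(av T S)\<^sup>*\<^sup>* c z \<Longrightarrow> c \<notin> S \<Longrightarrow> z \<notin> S"
  by (induction rule: rtranclp_induct) (auto simp: av_def)

lemma av_inV: "(av T S)\<^sup>*\<^sup>* c z \<Longrightarrow> c \<in> V \<Longrightarrow> z \<in> V"
  by (induction rule: rtranclp_induct) (auto simp: av_def dest: inV)

lemma av_mono: "(av T S)\<^sup>*\<^sup>* c z \<Longrightarrow> S' \<subseteq> S \<Longrightarrow> (av T S')\<^sup>*\<^sup>* c z"
proof -
  assume a: "(av T S)\<^sup>*\<^sup>* c z" "S' \<subseteq> S"
  have "\<And>p q. av T S p q \<Longrightarrow> av T S' p q" using a(2) by (auto simp: av_def)
  then show ?thesis using a(1) by (metis mono_rtranclp)
qed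

lemma tcomp_mem: "z \<in> tcomp V T x y \<longleftrightarrow> z \<in> V \<and> z \<noteq> x \<and> (av T {x})\<^sup>*\<^sup>* y z"
  by (auto simp: tcomp_alt)

lemma comp_root: "T x z \<Longrightarrow> z \<in> tcomp V T x z"
  using inV irrT by (auto simp: tcomp_mem)

lemma comp_closed: "a \<in> tcomp V T x z \<Longrightarrow> T a b \<Longrightarrow> b \<noteq> x \<Longrightarrow> b \<in> tcomp V T x z"
proof -
  assume a: "a \<in> tcomp V T x z" "T a b" "b \<noteq> x"
  then have "av T {x} a b" by (auto simp: av_def tcomp_mem)
  then show ?thesis using a inV by (auto simp: tcomp_mem intro: rtranclp.rtrancl_into_rtrancl)
qed

lemma comp_disj:
  assumes "T x z1" "T x z2" "z1 \<noteq> z2"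
  shows "tcomp V T x z1 \<inter> tcomp V T x z2 = {}"
proof (rule ccontr)
  assume "tcomp V T x z1 \<inter> tcomp V T x z2 \<noteq> {}"
  then obtain z where "(av T {x})\<^sup>*\<^sup>* z1 z" "(av T {x})\<^sup>*\<^sup>* z2 z" by (auto simp: tcomp_mem)
  then have "(av T {x})\<^sup>*\<^sup>* z1 z2" using av_sym by (metis rtranclp_trans)
  then show False using TL assms by blast
qed

lemma comp_eq_root:
  assumes "T x z1" "T x z2" "z2 \<in> tcomp V T x z1" shows "z1 = z2"
  using comp_disj[OF assms(1,2)] comp_root[OF assms(2)] assms(3) by blast

lemma split_av:
  assumes "(av T {b})\<^sup>*\<^sup>* c z" "c \<noteq> a" "c \<noteq> b"
  shows "(av T {a,b})\<^sup>*\<^sup>* c z \<or> (av T {b})\<^sup>*\<^sup>* c a"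
  using assms
proof (induction rule: rtranclp_induct)
  case base then show ?case by simp
next
  case (step y z)
  then consider "(av T {a,b})\<^sup>*\<^sup>* c y" | "(av T {b})\<^sup>*\<^sup>* c a" by blast
  then show ?case
  proof cases
    case 1
    have yn: "y \<notin> {a,b}" using av_notin[OF 1] step by auto
    show ?thesis
    proof (cases "z = a")
      case True
      have "(av T {b})\<^sup>*\<^sup>* c y" using av_mono[OF 1] by auto
      then show ?thesis using step True by (metis rtranclp.rtrancl_into_rtrancl)
    next
      case False
      then have "av T {a,b} y z" using step yn by (auto simp: av_def)
      then show ?thesis using 1 by (metis rtranclp.rtrancl_into_rtrancl)
    qed
  qed simp
qed

lemma comp_sub:
  assumes ab: "T a b" and bc: "T b c" and ca: "c \<noteq> a"
  shows "tcomp V T b c \<subseteq> tcomp V T a b"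
proof
  fix z assume "z \<in> tcomp V T b c"
  then have z: "z \<in> V" "z \<noteq> b" "(av T {b})\<^sup>*\<^sup>* c z" by (auto simp: tcomp_mem)
  have cb: "c \<noteq> b" using irrT bc by blast
  have "\<not> (av T {b})\<^sup>*\<^sup>* c a" using TL[of b c a] bc ab symT ca by blast
  then have 1: "(av T {a,b})\<^sup>*\<^sup>* c z" using split_av[OF z(3) ca cb] by blast
  then have za: "z \<noteq> a" using av_notin[OF 1] ca cb by auto
  have "(av T {a})\<^sup>*\<^sup>* c z" using av_mono[OF 1] by auto
  moreover have "av T {a} b c" using ab bc ca irrT by (auto simp: av_def)
  ultimately have "(av T {a})\<^sup>*\<^sup>* b z" by (meson converse_rtranclp_into_rtranclp)
  then show "z \<in> tcomp V T a b" using z za by (auto simp: tcomp_mem)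
qed

lemma comp_self: "T a b \<Longrightarrow> b \<in> tcomp V T a b" using comp_root .

lemma comp_notself: "b \<notin> tcomp V T b c" by (auto simp: tcomp_mem)

lemma decomp_av:
  assumes "(av T {a})\<^sup>*\<^sup>* b z" "b \<noteq> a"
  shows "z = b \<or> (\<exists>c. T b c \<and> c \<noteq> a \<and> (av T {a,b})\<^sup>*\<^sup>* c z)"
  using assms
proof (induction rule: rtranclp_induct)
  case base then show ?case by simp
next
  case (step y z)
  then consider "y = b" | c where "T b c" "c \<noteq> a" "(av T {a,b})\<^sup>*\<^sup>* c y" by blast
  then show ?case
  proof cases
    case 1
    then show ?thesis using step by (auto simp: av_def)
  next
    case 2
    show ?thesis
    proof (cases "z = b")
      case False
      have "y \<notin> {a,b}" using av_notin[OF 2(3)] 2 irrT by auto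
      then have "av T {a,b} y z" using step False by (auto simp: av_def)
      then show ?thesis using 2 by (meson rtranclp.rtrancl_into_rtrancl)
    qed simp
  qed
qed

lemma comp_decomp:
  assumes ab: "T a b" and z: "z \<in> tcomp V T a b" "z \<noteq> b"
  shows "\<exists>c. T b c \<and> c \<noteq> a \<and> z \<in> tcomp V T b c"
proof -
  have "(av T {a})\<^sup>*\<^sup>* b z" "z \<in> V" using z by (auto simp: tcomp_mem)
  then obtain c where c: "T b c" "c \<noteq> a" "(av T {a,b})\<^sup>*\<^sup>* c z"
    using decomp_av ab irrT z(2) by blast
  have "(av T {b})\<^sup>*\<^sup>* c z" using av_mono[OF c(3)] by auto
  then show ?thesis using c z `z \<in> V` by (auto simp: tcomp_mem)
qed

lemma fin_comp: "finite (tcomp V T a b)"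
  using finV by (auto simp: tcomp_def)

lemma leaf_comp:
  assumes ab: "T a b" and nb: "nbrs T b = {a}"
  shows "tcomp V T a b = {b}"
proof -
  have "z = b" if "(av T {a})\<^sup>*\<^sup>* b z" for z
    using that
  proof (induction rule: rtranclp_induct)
    case (step y z)
    then show ?case using nb by (auto simp: av_def nbrs_def)
  qed simp
  then show ?thesis using comp_root[OF ab] by (auto simp: tcomp_mem)
qed

lemma deg_leaf: "l \<in> leaves V T \<Longrightarrow> T l q \<Longrightarrow> nbrs T l = {q}"
proof -
  assume l: "l \<in> leaves V T" "T l q"
  then have "card (nbrs T l) = 1" by (auto simp: leaves_def deg_def)
  then obtain w where "nbrs T l = {w}" by (meson card_1_singletonE)
  then show ?thesis using l by (auto simp: nbrs_def)
qed

lemma exists_big: "\<exists>w\<in>V. 3 \<le> card (nbrs T w)"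
proof -
  have "Max (deg T ` V) \<in> deg T ` V" using finV Vne by auto
  then show ?thesis using md by (auto simp: max_deg_def deg_def)
qed

lemma leaf_nbr_nonleaf:
  assumes l: "l \<in> leaves V T" and lq: "T l q" shows "q \<notin> leaves V T"
proof
  assume q: "q \<in> leaves V T"
  have nl: "nbrs T l = {q}" using deg_leaf[OF l lq] .
  have nq: "nbrs T q = {l}" using deg_leaf[OF q symT[OF lq]] .
  have "z \<in> {l,q}" if "T\<^sup>*\<^sup>* l z" for z
    using that
  proof (induction rule: rtranclp_induct)
    case (step y z) then show ?case using nl nq by (auto simp: nbrs_def)
  qed simp
  moreover have "l \<in> V" using inV lq by blast
  ultimately have "V \<subseteq> {l,q}" using conn by blast
  then obtain w where w: "w \<in> V" "3 \<le> card (nbrs T w)" using exists_big by blast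
  have "nbrs T w \<subseteq> {l,q}" using nbrs_sub `V \<subseteq> {l,q}` by blast
  then have "card (nbrs T w) \<le> card {l,q}" by (meson card_mono finite.emptyI finite.insertI)
  also have "card {l,q} \<le> 2" by (simp add: card_insert_if)
  finally have "card (nbrs T w) \<le> 2" .
  then show False using w by simp
qed

end

context htree begin

abbreviation fn where "fn \<equiv> face_next rot"

lemma fn_simp: "fn (a,b) = (b, rot b a)" by (simp add: face_next_def)

lemma nbrs_iff: "w \<in> nbrs T b \<longleftrightarrow> T b w" by (simp add: nbrs_def)

lemma rot_in: "T b a \<Longrightarrow> T b (rot b a)"
proof -
  assume ba: "T b a"
  then have "b \<in> V" using inV by blast
  then have "bij_betw (rot b) (nbrs T b) (nbrs T b)" using rs by (auto simp: rotation_system_def)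
  then show ?thesis using ba by (metis bij_betw_apply nbrs_iff)
qed

lemma rot_inj: "T b a \<Longrightarrow> T b a' \<Longrightarrow> rot b a = rot b a' \<Longrightarrow> a = a'"
proof -
  assume ba: "T b a" "T b a'" "rot b a = rot b a'"
  then have "b \<in> V" using inV by blast
  then have "bij_betw (rot b) (nbrs T b) (nbrs T b)" using rs by (auto simp: rotation_system_def)
  then show ?thesis using ba by (metis bij_betw_imp_inj_on inj_onD nbrs_iff)
qed

lemma rot_orbit: "T b a \<Longrightarrow> T b w \<Longrightarrow> \<exists>k. (rot b ^^ k) a = w"
proof -
  assume ba: "T b a" "T b w"
  then have "b \<in> V" using inV by blast
  then show ?thesis using rs ba by (auto simp: rotation_system_def nbrs_iff)
qed

lemma rotpow_in: "T b a \<Longrightarrow> T b ((rot b ^^ k) a)"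
  by (induction k) (auto intro: rot_in)

lemma rot_nofix:
  assumes ba: "T b a" and c2: "2 \<le> card (nbrs T b)" shows "rot b a \<noteq> a"
proof
  assume r: "rot b a = a"
  have "(rot b ^^ k) a = a" for k using r by (induction k) auto
  then have "nbrs T b \<subseteq> {a}" using rot_orbit[OF ba] by (auto simp: nbrs_iff)
  then have "card (nbrs T b) \<le> card {a}" by (meson card_mono finite.emptyI finite.insertI)
  then have "card (nbrs T b) \<le> 1" by simp
  then show False using c2 by simp
qed

lemma rot_nofix2:
  assumes ba: "T b a" and c3: "3 \<le> card (nbrs T b)" shows "rot b (rot b a) \<noteq> a"
proof
  assume r: "rot b (rot b a) = a"
  have i: "(rot b ^^ k) a \<in> {a, rot b a}" for k using r by (induction k) auto
  have "nbrs T b \<subseteq> {a, rot b a}"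
  proof
    fix w assume "w \<in> nbrs T b"
    then obtain k where "(rot b ^^ k) a = w" using rot_orbit[OF ba] by (auto simp: nbrs_iff)
    then show "w \<in> {a, rot b a}" using i by metis
  qed
  then have "card (nbrs T b) \<le> card {a, rot b a}" by (meson card_mono finite.emptyI finite.insertI)
  also have "card {a, rot b a} \<le> 2" by (simp add: card_insert_if)
  finally show False using c3 by simp
qed

definition dart where "dart d \<longleftrightarrow> T (fst d) (snd d)"

lemma fn_dart: "dart d \<Longrightarrow> dart (fn d)"
proof (cases d)
  case (Pair a b)
  assume "dart d"
  then have "T b a" using Pair symT by (auto simp: dart_def)
  then show ?thesis using Pair rot_in by (auto simp: dart_def fn_simp)
qed

lemma fnp_dart: "dart d \<Longrightarrow> dart ((fn ^^ k) d)"
  by (induction k) (auto intro: fn_dart)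

lemma fn_inj: "dart d1 \<Longrightarrow> dart d2 \<Longrightarrow> fn d1 = fn d2 \<Longrightarrow> d1 = d2"
proof (cases d1; cases d2)
  fix a1 b1 a2 b2 assume d: "d1 = (a1,b1)" "d2 = (a2,b2)" "dart d1" "dart d2" "fn d1 = fn d2"
  then have "b1 = b2" "rot b1 a1 = rot b1 a2" by (auto simp: fn_simp)
  moreover have "T b1 a1" "T b2 a2" using d symT by (auto simp: dart_def)
  ultimately show "d1 = d2" using rot_inj d by auto
qed

lemma fnp_inj: "dart d1 \<Longrightarrow> dart d2 \<Longrightarrow> (fn ^^ k) d1 = (fn ^^ k) d2 \<Longrightarrow> d1 = d2"
proof (induction k arbitrary: d1 d2)
  case (Suc k)
  have "fn ((fn ^^ k) d1) = fn ((fn ^^ k) d2)" using Suc.prems by simp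
  moreover have "dart ((fn ^^ k) d1)" "dart ((fn ^^ k) d2)" using fnp_dart Suc.prems(1,2) by auto
  ultimately have "(fn ^^ k) d1 = (fn ^^ k) d2" using fn_inj by blast
  then show ?case using Suc by blast
qed simp

lemma fnp_add: "(fn ^^ (m + n)) d = (fn ^^ m) ((fn ^^ n) d)"
  by (simp add: funpow_add)

lemma fnp_Suc: "(fn ^^ Suc n) d = fn ((fn ^^ n) d)" by simp

lemma fst_fnp_Suc: "fst ((fn ^^ Suc n) d) = snd ((fn ^^ n) d)"
  by (cases "(fn ^^ n) d") (simp add: fn_simp)

lemma leaf_rot: "l \<in> leaves V T \<Longrightarrow> T l q \<Longrightarrow> rot l q = q"
proof -
  assume a: "l \<in> leaves V T" "T l q"
  have "T l (rot l q)" using rot_in[OF a(2)] .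
  then have "rot l q \<in> nbrs T l" by (simp add: nbrs_iff)
  then show ?thesis using deg_leaf[OF a] by simp
qed

lemma leaf_deg1: "b \<in> V \<Longrightarrow> nbrs T b = {a} \<Longrightarrow> b \<in> leaves V T"
  by (simp add: leaves_def deg_def)

lemma card_nbrs_ge2: "T b a \<Longrightarrow> nbrs T b \<noteq> {a} \<Longrightarrow> 2 \<le> card (nbrs T b)"
proof -
  assume "T b a" "nbrs T b \<noteq> {a}"
  moreover have "a \<in> nbrs T b" using `T b a` by (simp add: nbrs_iff)
  ultimately obtain w where "w \<in> nbrs T b" "w \<noteq> a" by blast
  then have "T b w" "w \<noteq> a" by (auto simp: nbrs_iff)
  then have "{a, w} \<subseteq> nbrs T b" using `T b a` by (auto simp: nbrs_iff)
  then have "card {a,w} \<le> card (nbrs T b)" using fin_nbrs card_mono by blast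
  then show ?thesis using `w \<noteq> a` by simp
qed

lemma nonleaf_of_card2: "2 \<le> card (nbrs T b) \<Longrightarrow> b \<notin> leaves V T"
  by (simp add: leaves_def deg_def)

definition ETP where "ETP a b K \<longleftrightarrow> (fn ^^ K) (a,b) = (b,a) \<and>
   (\<forall>j\<le>K. snd ((fn ^^ j) (a,b)) \<in> tcomp V T a b \<union> {a}) \<and>
   (\<forall>l\<in>tcomp V T a b \<inter> leaves V T. \<exists>j\<le>K. snd ((fn ^^ j) (a,b)) = l) \<and>
   (\<exists>j\<le>K. snd ((fn ^^ j) (a,b)) \<in> leaves V T)"

lemma ET: "T a b \<Longrightarrow> \<exists>K. ETP a b K"
proof (induction "card (tcomp V T a b)" arbitrary: a b rule: less_induct)
  case less
  note ab = less.prems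
  have bV: "b \<in> V" using inV ab by blast
  show ?case
  proof (cases "nbrs T b = {a}")
    case True
    have lb: "b \<in> leaves V T" using leaf_deg1[OF bV True] .
    have "rot b a = a" using leaf_rot[OF lb symT[OF ab]] .
    then have f1: "(fn ^^ 1) (a,b) = (b,a)" by (simp add: fn_simp)
    have tc: "tcomp V T a b = {b}" using leaf_comp[OF ab True] .
    have "ETP a b 1"
      unfolding ETP_def
    proof (intro conjI)
      show "(fn ^^ 1) (a,b) = (b,a)" by (rule f1)
      show "\<forall>j\<le>1. snd ((fn ^^ j) (a,b)) \<in> tcomp V T a b \<union> {a}"
      proof (intro allI impI)
        fix j :: nat assume "j \<le> 1"
        then consider "j = 0" | "j = 1" by linarith
        then show "snd ((fn ^^ j) (a,b)) \<in> tcomp V T a b \<union> {a}"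
          by cases (use f1 tc in auto)
      qed
      show "\<forall>l\<in>tcomp V T a b \<inter> leaves V T. \<exists>j\<le>1. snd ((fn ^^ j) (a,b)) = l"
        using tc by (intro ballI exI[of _ 0]) auto
      show "\<exists>j\<le>1. snd ((fn ^^ j) (a,b)) \<in> leaves V T"
        using lb by (intro exI[of _ 0]) auto
    qed
    then show ?thesis by blast
  next
    case False
    have c2: "2 \<le> card (nbrs T b)" using card_nbrs_ge2[OF symT[OF ab] False] .
    have bnl: "b \<notin> leaves V T" using nonleaf_of_card2[OF c2] .
    define c where "c t = (rot b ^^ t) a" for t
    have cin: "T b (c t)" for t unfolding c_def using rotpow_in symT[OF ab] by blast
    have c1: "c 1 \<noteq> a" unfolding c_def using rot_nofix[OF symT[OF ab] c2] by simp
    obtain k0 where "(rot b ^^ k0) (rot b a) = a" using rot_orbit[OF rot_in[OF symT[OF ab]] symT[OF ab]] by blast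
    then have ck0: "c (Suc k0) = a" unfolding c_def by (simp only: funpow_Suc_right comp_def)
    define d where "d = (LEAST t. 0 < t \<and> c t = a)"
    have dP: "0 < d \<and> c d = a" unfolding d_def
      by (rule LeastI[of "\<lambda>t. 0 < t \<and> c t = a" "Suc k0"]) (simp add: ck0)
    have dmin: "c t \<noteq> a" if "0 < t" "t < d" for t
      using not_less_Least[of t "\<lambda>t. 0 < t \<and> c t = a"] that unfolding d_def by auto
    have d2: "2 \<le> d"
    proof (rule ccontr)
      assume "\<not> 2 \<le> d" then have "d = 1" using dP by linarith
      then show False using dP c1 by simp
    qed
    have cper: "c (t + d) = c t" for t
      using dP unfolding c_def by (simp add: funpow_add)
    have cmod: "c (k mod d) = c k" for k
    proof (induction k rule: less_induct)
      case (less k)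
      show ?case
      proof (cases "k < d")
        case False
        then have "k = (k - d) + d" by simp
        then have "c k = c (k - d)" using cper by metis
        moreover have "k mod d = (k - d) mod d" using False by (simp add: le_mod_geq)
        ultimately show ?thesis using less[of "k - d"] dP False by simp
      qed simp
    qed
    have cover: "\<exists>s. 0 < s \<and> s < d \<and> c s = w" if wh: "T b w" "w \<noteq> a" for w
    proof -
      obtain k where "c k = w" unfolding c_def using rot_orbit[OF symT[OF ab] wh(1)] by blast
      then have "c (k mod d) = w" using cmod by simp
      moreover have "k mod d < d" using dP by simp
      moreover have "k mod d \<noteq> 0"
      proof
        assume "k mod d = 0"
        then have "c 0 = w" using \<open>c (k mod d) = w\<close> by simp
        then show False using wh by (simp add: c_def)
      qed
      ultimately show ?thesis by blast
    qed
    have bin: "b \<in> tcomp V T a b" using comp_root[OF ab] .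
    define Q where "Q t K \<longleftrightarrow> (fn ^^ K) (a,b) = (b, c t) \<and>
        (\<forall>j\<le>K. snd ((fn ^^ j) (a,b)) \<in> tcomp V T a b \<union> {a}) \<and>
        (\<forall>s. 1 \<le> s \<and> s < t \<longrightarrow> (\<forall>l\<in>tcomp V T b (c s) \<inter> leaves V T. \<exists>j\<le>K. snd ((fn ^^ j) (a,b)) = l)
              \<and> (\<exists>j\<le>K. snd ((fn ^^ j) (a,b)) \<in> leaves V T))" for t K
    have inner: "1 \<le> t \<Longrightarrow> t \<le> d \<Longrightarrow> \<exists>K. Q t K" for t
    proof (induction t)
      case 0 then show ?case by simp
    next
      case (Suc t)
      show ?case
      proof (cases "t = 0")
        case True
        have f1: "(fn ^^ 1) (a,b) = (b, c 1)" by (simp add: fn_simp c_def)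
        have "Q 1 1"
          unfolding Q_def
        proof (intro conjI)
          show "(fn ^^ 1) (a,b) = (b, c 1)" by (rule f1)
          show "\<forall>j\<le>1. snd ((fn ^^ j) (a,b)) \<in> tcomp V T a b \<union> {a}"
          proof (intro allI impI)
            fix j :: nat assume "j \<le> 1"
            then consider "j = 0" | "j = 1" by linarith
            then show "snd ((fn ^^ j) (a,b)) \<in> tcomp V T a b \<union> {a}"
            proof cases
              case 2
              have "c 1 \<in> tcomp V T a b" using comp_closed[OF bin cin c1] .
              then show ?thesis using 2 f1 by simp
            qed (use bin in simp)
          qed
        qed auto
        then show ?thesis using True by auto
      next
        case False
        then obtain K where QK: "Q t K" using Suc by auto
        have t1: "1 \<le> t" "t < d" using False Suc by auto
        have cta: "c t \<noteq> a" using dmin t1 by simp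
        have sub: "tcomp V T b (c t) \<subseteq> tcomp V T a b" using comp_sub[OF ab cin cta] .
        have "tcomp V T b (c t) \<subset> tcomp V T a b" using sub bin comp_notself by blast
        then have "card (tcomp V T b (c t)) < card (tcomp V T a b)"
          using fin_comp psubset_card_mono by blast
        then obtain k' where E: "ETP b (c t) k'" using less.hyps cin by blast
        have pos: "(fn ^^ (j + K)) (a,b) = (fn ^^ j) (b, c t)" for j
          using QK by (simp add: Q_def fnp_add)
        define K' where "K' = Suc (k' + K)"
        have fK': "(fn ^^ K') (a,b) = (b, c (Suc t))"
          using E pos[of k'] by (simp add: K'_def ETP_def fn_simp c_def)
        have "Q (Suc t) K'"
          unfolding Q_def
        proof (intro conjI)
          show "(fn ^^ K') (a,b) = (b, c (Suc t))" by (rule fK')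
          show "\<forall>j\<le>K'. snd ((fn ^^ j) (a,b)) \<in> tcomp V T a b \<union> {a}"
          proof (intro allI impI)
          fix j assume j: "j \<le> K'"
          have "j \<le> K \<or> (j - K + K = j \<and> j - K \<le> k') \<or> j = K'"
            using j unfolding K'_def by linarith
          then consider "j \<le> K" | j' where "j = j' + K" "j' \<le> k'" | "j = K'"
            by metis
          then show "snd ((fn ^^ j) (a,b)) \<in> tcomp V T a b \<union> {a}"
          proof cases
            case 1 then show ?thesis using QK by (simp add: Q_def)
          next
            case 2
            then have "snd ((fn ^^ j) (a,b)) \<in> tcomp V T b (c t) \<union> {b}"
              using E pos by (simp add: ETP_def)
            then show ?thesis using sub bin by auto
          next
            case 3
            show ?thesis
            proof (cases "c (Suc t) = a")
              case False
              then show ?thesis using comp_closed[OF bin cin False] 3 fK' by simp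
            qed (use 3 fK' in simp)
          qed
          qed
          show "\<forall>s. 1 \<le> s \<and> s < Suc t \<longrightarrow> (\<forall>l\<in>tcomp V T b (c s) \<inter> leaves V T. \<exists>j\<le>K'. snd ((fn ^^ j) (a,b)) = l)
              \<and> (\<exists>j\<le>K'. snd ((fn ^^ j) (a,b)) \<in> leaves V T)"
          proof (intro allI impI)
          fix s assume s: "1 \<le> s \<and> s < Suc t"
          show "(\<forall>l\<in>tcomp V T b (c s) \<inter> leaves V T. \<exists>j\<le>K'. snd ((fn ^^ j) (a,b)) = l)
              \<and> (\<exists>j\<le>K'. snd ((fn ^^ j) (a,b)) \<in> leaves V T)"
          proof (cases "s < t")
            case True
            then have "(\<forall>l\<in>tcomp V T b (c s) \<inter> leaves V T. \<exists>j\<le>K. snd ((fn ^^ j) (a,b)) = l)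
              \<and> (\<exists>j\<le>K. snd ((fn ^^ j) (a,b)) \<in> leaves V T)" using QK s by (simp add: Q_def)
            moreover have "K \<le> K'" by (simp add: K'_def)
            ultimately show ?thesis by (meson order_trans)
          next
            case False
            then have st: "s = t" using s by simp
            have A: "\<forall>l\<in>tcomp V T b (c t) \<inter> leaves V T. \<exists>j\<le>k'. snd ((fn ^^ j) (b, c t)) = l"
              "\<exists>j\<le>k'. snd ((fn ^^ j) (b, c t)) \<in> leaves V T" using E by (auto simp: ETP_def)
            have B: "j \<le> k' \<Longrightarrow> j + K \<le> K'" for j by (simp add: K'_def)
            show ?thesis
            proof (intro conjI ballI)
              fix l assume "l \<in> tcomp V T b (c s) \<inter> leaves V T"
              then obtain j where "j \<le> k'" "snd ((fn ^^ j) (b, c t)) = l" using A st by blast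
              then show "\<exists>j\<le>K'. snd ((fn ^^ j) (a,b)) = l" using pos B by metis
            next
              obtain j where "j \<le> k'" "snd ((fn ^^ j) (b, c t)) \<in> leaves V T" using A by blast
              then show "\<exists>j\<le>K'. snd ((fn ^^ j) (a,b)) \<in> leaves V T" using pos B by metis
            qed
          qed
          qed
        qed
        then show ?thesis by blast
      qed
    qed
    obtain K where QK: "Q d K" using inner[of d] d2 by auto
    have "ETP a b K"
      unfolding ETP_def
    proof (intro conjI)
      show "(fn ^^ K) (a,b) = (b,a)" using QK dP by (simp add: Q_def)
      show "\<forall>j\<le>K. snd ((fn ^^ j) (a,b)) \<in> tcomp V T a b \<union> {a}" using QK by (simp add: Q_def)
      show "\<forall>l\<in>tcomp V T a b \<inter> leaves V T. \<exists>j\<le>K. snd ((fn ^^ j) (a,b)) = l"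
      proof
        fix l assume l: "l \<in> tcomp V T a b \<inter> leaves V T"
        then have "l \<noteq> b" using bnl by blast
        then obtain w where w: "T b w" "w \<noteq> a" "l \<in> tcomp V T b w" using comp_decomp[OF ab] l by blast
        obtain s where "0 < s" "s < d" "c s = w" using cover w by blast
        moreover have "\<forall>l\<in>tcomp V T b (c s) \<inter> leaves V T. \<exists>j\<le>K. snd ((fn ^^ j) (a,b)) = l"
        proof -
          have "1 \<le> s \<and> s < d" using \<open>0 < s\<close> \<open>s < d\<close> by simp
          then show ?thesis using QK unfolding Q_def by blast
        qed
        ultimately show "\<exists>j\<le>K. snd ((fn ^^ j) (a,b)) = l" using l w by blast
      qed
      show "\<exists>j\<le>K. snd ((fn ^^ j) (a,b)) \<in> leaves V T" using QK d2 unfolding Q_def by auto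
    qed
    then show ?thesis by blast
  qed
qed

end

context htree begin

lemma cyc_adjE:
  assumes "cyc_adj V T rot l a"
  obtains p k where "l \<in> leaves V T" "a \<in> leaves V T" "T l p" "0 < k" "snd ((fn ^^ k) (l,p)) = a"
    "\<And>j. 0 < j \<Longrightarrow> j < k \<Longrightarrow> snd ((fn ^^ j) (l,p)) \<notin> leaves V T"
  using assms unfolding cyc_adj_def by blast

lemma succ_unique:
  assumes A: "cyc_adj V T rot l a" and B: "cyc_adj V T rot l b" shows "a = b"
proof -
  obtain p k where a: "l \<in> leaves V T" "a \<in> leaves V T" "T l p" "0 < k" "snd ((fn ^^ k) (l,p)) = a"
    "\<And>j. 0 < j \<Longrightarrow> j < k \<Longrightarrow> snd ((fn ^^ j) (l,p)) \<notin> leaves V T" using cyc_adjE[OF A] by blast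
  obtain p' k' where b: "b \<in> leaves V T" "T l p'" "0 < k'" "snd ((fn ^^ k') (l,p')) = b"
    "\<And>j. 0 < j \<Longrightarrow> j < k' \<Longrightarrow> snd ((fn ^^ j) (l,p')) \<notin> leaves V T" using cyc_adjE[OF B] by blast
  have "p' \<in> nbrs T l" using b(2) by (simp add: nbrs_iff)
  then have "p' = p" using deg_leaf[OF a(1) a(3)] by simp
  have "k = k'"
  proof (rule ccontr)
    assume "k \<noteq> k'"
    then consider "k < k'" | "k' < k" by linarith
    then show False
    proof cases
      case 1
      have "snd ((fn ^^ k) (l,p')) \<notin> leaves V T" using b(5) 1 a(4) by blast
      then show False using a(5,2) \<open>p' = p\<close> by simp
    next
      case 2
      have "snd ((fn ^^ k') (l,p)) \<notin> leaves V T" using a(6) 2 b(3) by blast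
      then show False using b(4,1) \<open>p' = p\<close> by simp
    qed
  qed
  then show ?thesis using a b \<open>p' = p\<close> by simp
qed

lemma pred_unique_aux:
  assumes A: "cyc_adj V T rot a l" and B: "cyc_adj V T rot b l"
    and kk: "ka \<le> kb"
    and a: "T a pa" "0 < ka" "snd ((fn ^^ ka) (a,pa)) = l"
    and b: "T b pb" "0 < kb" "snd ((fn ^^ kb) (b,pb)) = l"
      "\<And>j. 0 < j \<Longrightarrow> j < kb \<Longrightarrow> snd ((fn ^^ j) (b,pb)) \<notin> leaves V T"
    and al: "a \<in> leaves V T" and bl: "b \<in> leaves V T" and ll: "l \<in> leaves V T"
  shows "a = b"
proof -
  have da: "dart ((fn ^^ ka) (a,pa))" using fnp_dart a(1) by (simp add: dart_def)
  have db: "dart ((fn ^^ kb) (b,pb))" using fnp_dart b(1) by (simp add: dart_def)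
  define q where "q = fst ((fn ^^ ka) (a,pa))"
  have "T q l" using da a(3) by (simp add: dart_def q_def)
  then have q: "T l q" by (rule symT)
  have nl: "nbrs T l = {q}" using deg_leaf[OF ll q] .
  have f1: "fst ((fn ^^ ka) (a,pa)) = q" by (simp add: q_def)
  have t2: "T (fst ((fn ^^ kb) (b,pb))) l" using db b(3) by (simp add: dart_def)
  have "fst ((fn ^^ kb) (b,pb)) \<in> nbrs T l" using symT[OF t2] by (simp add: nbrs_iff)
  then have "fst ((fn ^^ kb) (b,pb)) = q" using nl by simp
  with f1 have eq: "(fn ^^ ka) (a,pa) = (fn ^^ kb) (b,pb)" using a(3) b(3) by (simp add: prod_eq_iff)
  define m where "m = kb - ka"
  have "kb = ka + m" using kk m_def by simp
  then have "(fn ^^ kb) (b,pb) = (fn ^^ ka) ((fn ^^ m) (b,pb))" by (simp only: fnp_add)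
  then have "(fn ^^ ka) (a,pa) = (fn ^^ ka) ((fn ^^ m) (b,pb))" using eq by simp
  moreover have "dart (a,pa)" "dart ((fn ^^ m) (b,pb))" using a(1) b(1) fnp_dart by (auto simp: dart_def)
  ultimately have E: "(fn ^^ m) (b,pb) = (a,pa)" using fnp_inj[of "(a,pa)" "(fn ^^ m) (b,pb)" ka] by simp
  show ?thesis
  proof (cases m)
    case 0 then show ?thesis using E by simp
  next
    case (Suc m')
    have s: "snd ((fn ^^ m') (b,pb)) = a" using fst_fnp_Suc[of m' "(b,pb)"] E Suc by simp
    show ?thesis
    proof (cases m')
      case 0
      then have "pb = a" using s by simp
      then show ?thesis using leaf_nbr_nonleaf[OF bl b(1)] al by simp
    next
      case (Suc m'')
      have "m' < kb" using \<open>m = Suc m'\<close> m_def a(2) kk by linarith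
      then show ?thesis using b(4)[of m'] Suc s al by simp
    qed
  qed
qed

lemma pred_unique:
  assumes A: "cyc_adj V T rot a l" and B: "cyc_adj V T rot b l" shows "a = b"
proof -
  obtain pa ka where a: "a \<in> leaves V T" "l \<in> leaves V T" "T a pa" "0 < ka" "snd ((fn ^^ ka) (a,pa)) = l"
    "\<And>j. 0 < j \<Longrightarrow> j < ka \<Longrightarrow> snd ((fn ^^ j) (a,pa)) \<notin> leaves V T" using cyc_adjE[OF A] by blast
  obtain pb kb where b: "b \<in> leaves V T" "T b pb" "0 < kb" "snd ((fn ^^ kb) (b,pb)) = l"
    "\<And>j. 0 < j \<Longrightarrow> j < kb \<Longrightarrow> snd ((fn ^^ j) (b,pb)) \<notin> leaves V T" using cyc_adjE[OF B] by blast
  show ?thesis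
  proof (cases "ka \<le> kb")
    case True
    show ?thesis by (rule pred_unique_aux[OF A B True a(3,4,5) b(2,3,4,5) a(1) b(1) a(2)])
  next
    case False
    then have "kb \<le> ka" by simp
    have "b = a" by (rule pred_unique_aux[OF B A \<open>kb \<le> ka\<close> b(2,3,4) a(3,4,5,6) b(1) a(1) a(2)])
    then show ?thesis by simp
  qed
qed

lemma next_leaf:
  assumes d0: "dart d0" and st: "s < t"
    and ls: "snd ((fn ^^ s) d0) \<in> leaves V T" and lt: "snd ((fn ^^ t) d0) \<in> leaves V T"
    and btw: "\<And>j. s < j \<Longrightarrow> j < t \<Longrightarrow> snd ((fn ^^ j) d0) \<notin> leaves V T"
  shows "cyc_adj V T rot (snd ((fn ^^ s) d0)) (snd ((fn ^^ t) d0))"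
proof -
  define l where "l = snd ((fn ^^ s) d0)"
  obtain q where Os: "(fn ^^ s) d0 = (q, l)" unfolding l_def by (metis prod.collapse)
  have "dart ((fn ^^ s) d0)" using fnp_dart d0 by blast
  then have "T q l" using Os by (simp add: dart_def)
  then have lq: "T l q" by (rule symT)
  have ll: "l \<in> leaves V T" using ls l_def by simp
  have O1: "(fn ^^ Suc s) d0 = (l, q)" using Os leaf_rot[OF ll lq] by (simp add: fn_simp)
  have qn: "q \<notin> leaves V T" using leaf_nbr_nonleaf[OF ll lq] .
  have "t \<noteq> Suc s" using O1 qn lt by auto
  then have ts: "Suc s < t" using st by simp
  define k where "k = t - Suc s"
  have Ok: "(fn ^^ j) (l,q) = (fn ^^ (j + Suc s)) d0" for j using O1 by (simp only: fnp_add)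
  show ?thesis unfolding cyc_adj_def l_def[symmetric]
  proof (intro conjI exI)
    show "l \<in> leaves V T" by (rule ll)
    show "snd ((fn ^^ t) d0) \<in> leaves V T" by (rule lt)
    show "T l q" by (rule lq)
    show "0 < k" using ts k_def by simp
    show "snd ((fn ^^ k) (l,q)) = snd ((fn ^^ t) d0)" using Ok[of k] ts k_def by simp
    show "\<forall>j. 0 < j \<and> j < k \<longrightarrow> snd ((fn ^^ j) (l,q)) \<notin> leaves V T"
    proof (intro allI impI)
      fix j assume j: "0 < j \<and> j < k"
      then have "s < j + Suc s" "j + Suc s < t" using k_def by auto
      then show "snd ((fn ^^ j) (l,q)) \<notin> leaves V T" using Ok[of j] btw[of "j + Suc s"] by simp
    qed
  qed
qed

end

locale curv =
  fixes V :: "'a set" and H :: "'a \<Rightarrow> 'a \<Rightarrow> bool" and u v :: 'a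
  assumes finV: "finite V" and uV: "u \<in> V" and vV: "v \<in> V" and uv: "u \<noteq> v" and Huv: "H u v"
    and Hsym: "\<And>a b. H a b \<Longrightarrow> H b a"
    and Hsub: "\<And>a b. H a b \<Longrightarrow> a \<in> V \<and> b \<in> V"
    and Hconn: "\<And>a b. a \<in> V \<Longrightarrow> b \<in> V \<Longrightarrow> H\<^sup>*\<^sup>* a b"
    and nuu: "\<not> H u u" and nvv: "\<not> H v v"
    and du: "3 \<le> deg H u" and dv: "3 \<le> deg H v"
    and tri: "\<And>a. H u a \<Longrightarrow> a \<noteq> v \<Longrightarrow> \<not> H v a"
    and sq: "\<And>a b. H u a \<Longrightarrow> a \<noteq> v \<Longrightarrow> H v b \<Longrightarrow> b \<noteq> u \<Longrightarrow> a \<noteq> b \<and> \<not> H a b"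
begin

lemma nbrs_subV: "nbrs H w \<subseteq> V" using Hsub by (auto simp: nbrs_def)
lemma fin_nbrs: "finite (nbrs H w)" using nbrs_subV finV finite_subset by blast

lemma gd_ex: "a \<in> V \<Longrightarrow> b \<in> V \<Longrightarrow> walk_of_len H (gdist H a b) a b"
  unfolding gdist_def using Hconn walk_rtranclp by (metis LeastI_ex)

lemma gd_1: "a \<in> V \<Longrightarrow> b \<in> V \<Longrightarrow> a \<noteq> b \<Longrightarrow> 1 \<le> gdist H a b"
proof -
  assume a: "a \<in> V" "b \<in> V" "a \<noteq> b"
  have "(H ^^ gdist H a b) a b" using gd_ex[OF a(1,2)] by (simp add: walk_relpowp)
  then show ?thesis using a(3) by (cases "gdist H a b") auto
qed

lemma gd_2: "a \<in> V \<Longrightarrow> b \<in> V \<Longrightarrow> a \<noteq> b \<Longrightarrow> \<not> H a b \<Longrightarrow> 2 \<le> gdist H a b"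
proof -
  assume a: "a \<in> V" "b \<in> V" "a \<noteq> b" "\<not> H a b"
  have "(H ^^ gdist H a b) a b" using gd_ex[OF a(1,2)] by (simp add: walk_relpowp)
  moreover have "gdist H a b \<noteq> 0" using calculation a(3) by (cases "gdist H a b") auto
  moreover have "gdist H a b \<noteq> 1" using calculation a(4) by auto
  ultimately show ?thesis by linarith
qed

lemma gd_uv: "gdist H u v = 1"
proof -
  have "walk_of_len H 1 u v" unfolding walk_of_len_def
    by (rule exI[of _ "\<lambda>i. if i = 0 then u else v"]) (simp add: Huv)
  then have "gdist H u v \<le> 1" unfolding gdist_def by (rule Least_le)
  then show ?thesis using gd_1[OF uV vV uv] by linarith
qed

abbreviation m where "m \<alpha> w \<equiv> lly_measure H \<alpha> w"

definition cost :: "('a \<Rightarrow> 'a \<Rightarrow> real) \<Rightarrow> real" where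
  "cost \<pi> = (\<Sum>a\<in>V. \<Sum>b\<in>V. \<pi> a b * real (gdist H a b))"

definition C where "C \<alpha> = couplings V (m \<alpha> u) (m \<alpha> v)"

definition W where "W \<alpha> = Inf (cost ` C \<alpha>)"

lemma W_eq: "wasserstein V H (m \<alpha> u) (m \<alpha> v) = W \<alpha>"
proof -
  have "{(\<Sum>a\<in>V. \<Sum>b\<in>V. \<pi> a b * real (gdist H a b)) | \<pi>. \<pi> \<in> couplings V (m \<alpha> u) (m \<alpha> v)} = cost ` C \<alpha>"
    by (auto simp: cost_def C_def)
  then show ?thesis by (simp add: wasserstein_def W_def)
qed

lemma deg_pos: "w \<in> {u,v} \<Longrightarrow> 0 < deg H w" using du dv by auto

lemma sum_m:
  assumes w: "w \<in> {u,v}"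
  shows "(\<Sum>z\<in>V. m \<alpha> w z * g z) = \<alpha> * g w + (1 - \<alpha>) / real (deg H w) * (\<Sum>z\<in>nbrs H w. g z)"
proof -
  have wV: "w \<in> V" using w uV vV by auto
  have nw: "\<not> H w w" using w nuu nvv by auto
  have "(\<Sum>z\<in>V. m \<alpha> w z * g z) = m \<alpha> w w * g w + (\<Sum>z\<in>V - {w}. m \<alpha> w z * g z)"
    using wV finV by (simp add: sum.remove)
  also have "(\<Sum>z\<in>V - {w}. m \<alpha> w z * g z) = (\<Sum>z\<in>V - {w}. if H w z then (1 - \<alpha>) / real (deg H w) * g z else 0)"
    by (rule sum.cong) (auto simp: lly_measure_def)
  also have "\<dots> = (\<Sum>z\<in>{z \<in> V - {w}. H w z}. (1 - \<alpha>) / real (deg H w) * g z)"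
    by (rule sum.inter_filter[symmetric]) (use finV in simp)
  also have "{z \<in> V - {w}. H w z} = nbrs H w" using Hsub nw by (auto simp: nbrs_def)
  finally show ?thesis by (simp add: lly_measure_def sum_distrib_left)
qed

lemma sum_m1: "w \<in> {u,v} \<Longrightarrow> (\<Sum>z\<in>V. m \<alpha> w z) = 1"
proof -
  assume w: "w \<in> {u,v}"
  have "(\<Sum>z\<in>V. m \<alpha> w z) = (\<Sum>z\<in>V. m \<alpha> w z * 1)" by simp
  also have "\<dots> = \<alpha> + (1 - \<alpha>) / real (deg H w) * real (card (nbrs H w))"
    using sum_m[OF w, of \<alpha> "\<lambda>_. 1"] by simp
  also have "\<dots> = 1" using deg_pos[OF w] by (simp add: deg_def)
  finally show ?thesis .
qed

lemma m_nonneg: "0 \<le> \<alpha> \<Longrightarrow> \<alpha> \<le> 1 \<Longrightarrow> 0 \<le> m \<alpha> w z"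
  by (auto simp: lly_measure_def)

lemma m_supp: "m \<alpha> w z \<noteq> 0 \<Longrightarrow> z = w \<or> H w z"
  by (auto simp: lly_measure_def split: if_splits)

lemma C_ne: "0 \<le> \<alpha> \<Longrightarrow> \<alpha> \<le> 1 \<Longrightarrow> C \<alpha> \<noteq> {}"
proof -
  assume a: "0 \<le> \<alpha>" "\<alpha> \<le> 1"
  define \<pi> where "\<pi> a b = m \<alpha> u a * m \<alpha> v b" for a b
  have "\<pi> \<in> C \<alpha>"
    unfolding C_def couplings_def
  proof (intro CollectI conjI allI ballI)
    fix a b show "0 \<le> \<pi> a b" using m_nonneg a by (simp add: \<pi>_def)
  next
    fix a show "(\<Sum>b\<in>V. \<pi> a b) = m \<alpha> u a"
      using sum_m1[of v \<alpha>] by (simp add: \<pi>_def sum_distrib_left[symmetric])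
  next
    fix b show "(\<Sum>a\<in>V. \<pi> a b) = m \<alpha> v b"
      using sum_m1[of u \<alpha>] by (simp add: \<pi>_def sum_distrib_right[symmetric])
  qed
  then show ?thesis by blast
qed

lemma cost_lb:
  assumes \<pi>: "\<pi> \<in> couplings V m1 m2"
    and f: "\<And>a b. a \<in> V \<Longrightarrow> b \<in> V \<Longrightarrow> m1 a \<noteq> 0 \<Longrightarrow> m2 b \<noteq> 0 \<Longrightarrow> f b - f a \<le> real (gdist H a b)"
  shows "(\<Sum>b\<in>V. m2 b * f b) - (\<Sum>a\<in>V. m1 a * f a) \<le> cost \<pi>"
proof -
  have nn: "0 \<le> \<pi> a b" for a b using \<pi> by (auto simp: couplings_def)
  have r1: "(\<Sum>b\<in>V. \<pi> a b) = m1 a" if "a \<in> V" for a using \<pi> that by (auto simp: couplings_def)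
  have r2: "(\<Sum>a\<in>V. \<pi> a b) = m2 b" if "b \<in> V" for b using \<pi> that by (auto simp: couplings_def)
  have z1: "\<pi> a b = 0" if "a \<in> V" "b \<in> V" "m1 a = 0" for a b
  proof -
    have "(\<Sum>b\<in>V. \<pi> a b) = 0" using r1 that by simp
    then show ?thesis using sum_nonneg_eq_0_iff[OF finV, of "\<pi> a"] nn that by auto
  qed
  have z2: "\<pi> a b = 0" if "a \<in> V" "b \<in> V" "m2 b = 0" for a b
  proof -
    have "(\<Sum>a\<in>V. \<pi> a b) = 0" using r2 that by simp
    then show ?thesis using sum_nonneg_eq_0_iff[OF finV, of "\<lambda>a. \<pi> a b"] nn that by auto
  qed
  have trm: "\<pi> a b * (f b - f a) \<le> \<pi> a b * real (gdist H a b)" if "a \<in> V" "b \<in> V" for a b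
  proof (cases "m1 a = 0 \<or> m2 b = 0")
    case True then show ?thesis using z1 z2 that by auto
  next
    case False then show ?thesis using f[OF that] nn by (simp add: mult_left_mono)
  qed
  have "(\<Sum>a\<in>V. \<Sum>b\<in>V. \<pi> a b * (f b - f a)) = (\<Sum>a\<in>V. \<Sum>b\<in>V. \<pi> a b * f b) - (\<Sum>a\<in>V. \<Sum>b\<in>V. \<pi> a b * f a)"
    by (simp add: right_diff_distrib sum_subtractf)
  also have "(\<Sum>a\<in>V. \<Sum>b\<in>V. \<pi> a b * f b) = (\<Sum>b\<in>V. m2 b * f b)"
    by (subst sum.swap) (simp add: r2 sum_distrib_right[symmetric])
  also have "(\<Sum>a\<in>V. \<Sum>b\<in>V. \<pi> a b * f a) = (\<Sum>a\<in>V. m1 a * f a)"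
    by (simp add: r1 sum_distrib_right[symmetric])
  finally have e: "(\<Sum>a\<in>V. \<Sum>b\<in>V. \<pi> a b * (f b - f a)) = (\<Sum>b\<in>V. m2 b * f b) - (\<Sum>a\<in>V. m1 a * f a)" .
  have "(\<Sum>a\<in>V. \<Sum>b\<in>V. \<pi> a b * (f b - f a)) \<le> cost \<pi>"
    unfolding cost_def by (intro sum_mono) (use trm in auto)
  then show ?thesis using e by simp
qed

definition f0 :: "'a \<Rightarrow> real" where
  "f0 z = (if z = u then 1 else if z = v then 2 else if H u z then 0 else 2)"

lemma cost_ge1:
  assumes a: "0 \<le> \<alpha>" "\<alpha> \<le> 1" and \<pi>: "\<pi> \<in> C \<alpha>"
  shows "1 \<le> cost \<pi>"
proof -
  have f: "f0 b - f0 a \<le> real (gdist H a b)"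
    if ab: "a \<in> V" "b \<in> V" "m \<alpha> u a \<noteq> 0" "m \<alpha> v b \<noteq> 0" for a b
  proof -
    have A: "a = u \<or> H u a" and B: "b = v \<or> H v b" using m_supp ab by blast+
    have g0: "0 \<le> real (gdist H a b)" by simp
    show ?thesis
    proof (cases "a = u")
      case True
      then show ?thesis
      proof (cases "b = u")
        case False
        then show ?thesis using True gd_1[OF ab(1,2)] by (auto simp: f0_def)
      qed (simp add: f0_def True)
    next
      case au: False
      then have Hua: "H u a" using A by simp
      show ?thesis
      proof (cases "a = v")
        case True
        then show ?thesis using B uv nvv by (auto simp: f0_def)
      next
        case av: False
        have fa: "f0 a = 0" using au av Hua by (simp add: f0_def)
        show ?thesis
        proof (cases "b = v")
          case True
          have "\<not> H a v" using tri[OF Hua av] Hsym by blast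
          then show ?thesis using gd_2[OF ab(1,2)] True av fa by (auto simp: f0_def)
        next
          case bv: False
          then have Hvb: "H v b" using B by simp
          show ?thesis
          proof (cases "b = u")
            case True
            then show ?thesis using gd_1[OF ab(1,2)] au fa by (auto simp: f0_def)
          next
            case bu: False
            have "a \<noteq> b" "\<not> H a b" using sq[OF Hua av Hvb bu] by auto
            then show ?thesis using gd_2[OF ab(1,2)] fa f0_def by auto
          qed
        qed
      qed
    qed
  qed
  have lb: "(\<Sum>b\<in>V. m \<alpha> v b * f0 b) - (\<Sum>a\<in>V. m \<alpha> u a * f0 a) \<le> cost \<pi>"
    using cost_lb[OF \<pi>[unfolded C_def]] f by blast
  define du' where "du' = real (deg H u)"
  define dv' where "dv' = real (deg H v)"
  have du3: "3 \<le> du'" using du by (simp add: du'_def)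
  have dv3: "3 \<le> dv'" using dv by (simp add: dv'_def)
  have su: "(\<Sum>z\<in>nbrs H u. f0 z) = 2"
  proof -
    have vin: "v \<in> nbrs H u" using Huv by (simp add: nbrs_def)
    have "(\<Sum>z\<in>nbrs H u. f0 z) = f0 v + (\<Sum>z\<in>nbrs H u - {v}. f0 z)"
      using vin fin_nbrs by (simp add: sum.remove)
    also have "(\<Sum>z\<in>nbrs H u - {v}. f0 z) = 0"
      by (rule sum.neutral) (use nuu in \<open>auto simp: f0_def nbrs_def\<close>)
    finally show ?thesis using uv by (simp add: f0_def)
  qed
  have sv: "(\<Sum>z\<in>nbrs H v. f0 z) = 1 + 2 * (dv' - 1)"
  proof -
    have uin: "u \<in> nbrs H v" using Hsym[OF Huv] by (simp add: nbrs_def)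
    have "(\<Sum>z\<in>nbrs H v. f0 z) = f0 u + (\<Sum>z\<in>nbrs H v - {u}. f0 z)"
      using uin fin_nbrs by (simp add: sum.remove)
    also have "(\<Sum>z\<in>nbrs H v - {u}. f0 z) = (\<Sum>z\<in>nbrs H v - {u}. 2)"
    proof (rule sum.cong)
      fix z assume z: "z \<in> nbrs H v - {u}"
      then have "H v z" "z \<noteq> u" by (auto simp: nbrs_def)
      moreover have "z \<noteq> v" using z nvv by (auto simp: nbrs_def)
      moreover have "\<not> H u z"
      proof
        assume "H u z"
        then show False using tri[OF \<open>H u z\<close> \<open>z \<noteq> v\<close>] \<open>H v z\<close> by blast
      qed
      ultimately show "f0 z = 2" by (simp add: f0_def)
    qed simp
    also have "\<dots> = 2 * (dv' - 1)"
    proof -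
      have "1 \<le> card (nbrs H v)" using dv by (simp add: deg_def)
      then show ?thesis using uin fin_nbrs by (simp add: dv'_def deg_def card_Diff_singleton of_nat_diff)
    qed
    finally show ?thesis using uv by (simp add: f0_def)
  qed
  have e1: "(\<Sum>b\<in>V. m \<alpha> v b * f0 b) = 2 * \<alpha> + (1 - \<alpha>) / dv' * (1 + 2 * (dv' - 1))"
    using sum_m[of v \<alpha> f0] sv uv by (simp add: f0_def dv'_def)
  have e2: "(\<Sum>a\<in>V. m \<alpha> u a * f0 a) = \<alpha> + (1 - \<alpha>) / du' * 2"
    using sum_m[of u \<alpha> f0] su by (simp add: f0_def du'_def)
  have key: "1 \<le> 2 * \<alpha> + (1 - \<alpha>) / dv' * (1 + 2 * (dv' - 1)) - (\<alpha> + (1 - \<alpha>) / du' * 2)"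
  proof -
    have "(1 - \<alpha>) / dv' * (1 + 2 * (dv' - 1)) = (1 - \<alpha>) * (2 - 1 / dv')"
      using dv3 by (simp add: field_simps)
    moreover have "(1 - \<alpha>) / du' * 2 = (1 - \<alpha>) * (2 / du')" by simp
    moreover have "1 / dv' + 2 / du' \<le> 1"
    proof -
      have "1 / dv' \<le> 1/3" using dv3 by (simp add: divide_simps)
      moreover have "2 / du' \<le> 2/3" using du3 by (simp add: divide_simps)
      ultimately show ?thesis by linarith
    qed
    moreover have "0 \<le> 1 - \<alpha>" using a by simp
    moreover have "(1 - \<alpha>) * (1 / dv' + 2 / du') \<le> (1 - \<alpha>) * 1"
      using calculation(3,4) by (rule mult_left_mono)
    ultimately show ?thesis by (simp add: algebra_simps)
  qed
  show ?thesis using lb e1 e2 key by linarith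
qed

lemma bdd: "bdd_below (cost ` C \<alpha>)" if "0 \<le> \<alpha>" "\<alpha> \<le> 1"
  by (rule bdd_belowI2[where m=1]) (rule cost_ge1[OF that])

lemma W_ge1: "0 \<le> \<alpha> \<Longrightarrow> \<alpha> \<le> 1 \<Longrightarrow> 1 \<le> W \<alpha>"
  unfolding W_def using C_ne cost_ge1 by (auto intro!: cInf_greatest)

definition delta where "delta a b = (if a = u \<and> b = v then 1 else (0::real))"

lemma m1_simp: "m 1 w z = (if z = w then 1 else 0)" by (simp add: lly_measure_def)

lemma delta_C: "delta \<in> C 1"
  unfolding C_def couplings_def
proof (intro CollectI conjI allI ballI)
  fix a b show "0 \<le> delta a b" by (simp add: delta_def)
next
  fix a assume "a \<in> V"
  show "(\<Sum>b\<in>V. delta a b) = m 1 u a"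
    using vV finV by (simp add: delta_def m1_simp sum.delta')
next
  fix b assume "b \<in> V"
  show "(\<Sum>a\<in>V. delta a b) = m 1 v b"
    using uV finV by (auto simp: delta_def m1_simp sum.delta' if_distrib cong: if_cong)
qed

lemma cost_delta: "cost delta = 1"
proof -
  have r: "(\<Sum>b\<in>V. delta a b * real (gdist H a b)) = (if a = u then real (gdist H a v) else 0)" for a
  proof (cases "a = u")
    case True
    then have "(\<Sum>b\<in>V. delta a b * real (gdist H a b)) = (\<Sum>b\<in>V. if b = v then real (gdist H a b) else 0)"
      by (intro sum.cong) (auto simp: delta_def)
    also have "\<dots> = real (gdist H a v)" using vV finV by (simp add: sum.delta')
    finally show ?thesis using True by simp
  qed (simp add: delta_def)
  have "cost delta = (\<Sum>a\<in>V. if a = u then real (gdist H a v) else 0)"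
    unfolding cost_def using r by simp
  also have "\<dots> = 1" using uV finV gd_uv by (simp add: sum.delta')
  finally show ?thesis .
qed

lemma m_affine: "m (t * \<alpha> + (1 - t)) w z = t * m \<alpha> w z + (1 - t) * m 1 w z"
  by (auto simp: lly_measure_def field_simps)

lemma combo_C:
  assumes \<pi>: "\<pi> \<in> C \<alpha>" and t: "0 \<le> t" "t \<le> 1"
  shows "(\<lambda>a b. t * \<pi> a b + (1 - t) * delta a b) \<in> C (t * \<alpha> + (1 - t))"
proof -
  have p: "\<forall>a b. 0 \<le> \<pi> a b" "\<forall>a\<in>V. (\<Sum>b\<in>V. \<pi> a b) = m \<alpha> u a" "\<forall>b\<in>V. (\<Sum>a\<in>V. \<pi> a b) = m \<alpha> v b"
    using \<pi> by (auto simp: C_def couplings_def)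
  have d: "\<forall>a b. 0 \<le> delta a b" "\<forall>a\<in>V. (\<Sum>b\<in>V. delta a b) = m 1 u a" "\<forall>b\<in>V. (\<Sum>a\<in>V. delta a b) = m 1 v b"
    using delta_C by (auto simp: C_def couplings_def)
  show ?thesis
    unfolding C_def couplings_def
  proof (intro CollectI conjI allI ballI)
    fix a b show "0 \<le> t * \<pi> a b + (1 - t) * delta a b" using p d t by simp
  next
    fix a assume "a \<in> V"
    then show "(\<Sum>b\<in>V. t * \<pi> a b + (1 - t) * delta a b) = m (t * \<alpha> + (1 - t)) u a"
      using p d by (simp add: sum.distrib sum_distrib_left[symmetric] m_affine)
  next
    fix b assume "b \<in> V"
    then show "(\<Sum>a\<in>V. t * \<pi> a b + (1 - t) * delta a b) = m (t * \<alpha> + (1 - t)) v b"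
      using p d by (simp add: sum.distrib sum_distrib_left[symmetric] m_affine)
  qed
qed

lemma cost_combo: "cost (\<lambda>a b. t * \<pi> a b + (1 - t) * delta a b) = t * cost \<pi> + (1 - t) * cost delta"
proof -
  have e: "(t * \<pi> a b + (1 - t) * delta a b) * g = t * (\<pi> a b * g) + (1 - t) * (delta a b * g)" for a b and g :: real
    by (simp add: algebra_simps)
  show ?thesis unfolding cost_def e by (simp only: sum.distrib sum_distrib_left)
qed

lemma W_convex:
  assumes a: "0 \<le> \<alpha>" "\<alpha> \<le> 1" and t: "0 < t" "t \<le> 1"
  shows "W (t * \<alpha> + (1 - t)) \<le> t * W \<alpha> + (1 - t)"
proof -
  define \<gamma> where "\<gamma> = t * \<alpha> + (1 - t)"
  have "t * \<alpha> \<le> t" using a t by (simp add: mult_left_le)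
  moreover have "0 \<le> t * \<alpha>" using a t by simp
  ultimately have g: "0 \<le> \<gamma>" "\<gamma> \<le> 1" using t unfolding \<gamma>_def by linarith+
  have "(W \<gamma> - (1 - t)) / t \<le> cost \<pi>" if \<pi>: "\<pi> \<in> C \<alpha>" for \<pi>
  proof -
    have "W \<gamma> \<le> cost (\<lambda>a b. t * \<pi> a b + (1 - t) * delta a b)"
      unfolding W_def using combo_C[OF \<pi>] t bdd[OF g] \<gamma>_def by (auto intro!: cInf_lower)
    also have "\<dots> = t * cost \<pi> + (1 - t)" using cost_combo cost_delta by simp
    finally show ?thesis using t by (simp add: divide_simps mult.commute)
  qed
  then have "(W \<gamma> - (1 - t)) / t \<le> W \<alpha>"
    unfolding W_def using C_ne[OF a] by (auto intro!: cInf_greatest)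
  then show ?thesis using t unfolding \<gamma>_def by (simp add: divide_simps mult.commute)
qed

definition h where "h \<alpha> = kappa_alpha V H \<alpha> u v / (1 - \<alpha>)"

lemma h_eq: "h \<alpha> = (1 - W \<alpha>) / (1 - \<alpha>)"
  by (simp add: h_def kappa_alpha_def W_eq)

lemma h_nonpos: "0 \<le> \<alpha> \<Longrightarrow> \<alpha> < 1 \<Longrightarrow> h \<alpha> \<le> 0"
  using W_ge1[of \<alpha>] by (simp add: h_eq divide_nonpos_pos)

lemma h_mono:
  assumes a: "0 \<le> \<alpha>" "\<alpha> < \<gamma>" "\<gamma> < 1"
  shows "h \<alpha> \<le> h \<gamma>"
proof -
  define t where "t = (1 - \<gamma>) / (1 - \<alpha>)"
  have t: "0 < t" "t \<le> 1" using a by (auto simp: t_def divide_simps)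
  have "t * (1 - \<alpha>) = 1 - \<gamma>" using a by (simp add: t_def)
  then have ge: "t * \<alpha> + (1 - t) = \<gamma>" by (simp add: algebra_simps)
  have "W \<gamma> \<le> t * W \<alpha> + (1 - t)" using W_convex[of \<alpha> t] a t ge by simp
  then have "t * (1 - W \<alpha>) \<le> 1 - W \<gamma>" by (simp add: algebra_simps)
  then have "t * (1 - W \<alpha>) / (1 - \<gamma>) \<le> (1 - W \<gamma>) / (1 - \<gamma>)"
    using a by (simp add: divide_right_mono)
  moreover have "t * (1 - W \<alpha>) / (1 - \<gamma>) = (1 - W \<alpha>) / (1 - \<alpha>)"
  proof -
    have n: "1 - \<gamma> \<noteq> 0" "1 - \<alpha> \<noteq> 0" using a by auto
    have "t * (1 - W \<alpha>) / (1 - \<gamma>) = ((1 - \<gamma>) / (1 - \<gamma>)) * ((1 - W \<alpha>) / (1 - \<alpha>))"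
      by (simp add: t_def)
    then show ?thesis using n by simp
  qed
  ultimately show ?thesis by (simp add: h_eq)
qed

theorem kappa_nonpos: "kappa_lly V H u v \<le> 0"
proof -
  define L where "L = (SUP \<alpha>\<in>{0..<1}. h \<alpha>)"
  have ne: "{0..<(1::real)} \<noteq> {}" by simp
  have bdd: "bdd_above (h ` {0..<1})" by (rule bdd_aboveI2[where M=0]) (use h_nonpos in auto)
  have L0: "L \<le> 0" unfolding L_def using h_nonpos by (intro cSUP_least ne) auto
  have lim: "(h \<longlongrightarrow> L) (at_left 1)"
  proof (rule order_tendstoI)
    fix a assume "a < L"
    then obtain \<alpha>0 where \<alpha>0: "\<alpha>0 \<in> {0..<1}" "a < h \<alpha>0"
      using less_cSUP_iff[OF ne bdd] L_def by blast
    have "eventually (\<lambda>x. x \<in> {\<alpha>0<..<1}) (at_left (1::real))"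
      using \<alpha>0 by (intro eventually_at_left_real) auto
    then show "eventually (\<lambda>x. a < h x) (at_left 1)"
    proof (rule eventually_mono)
      fix x assume "x \<in> {\<alpha>0<..<1}"
      then have "h \<alpha>0 \<le> h x" using h_mono[of \<alpha>0 x] \<alpha>0 by auto
      then show "a < h x" using \<alpha>0 by simp
    qed
  next
    fix b assume "L < b"
    have "eventually (\<lambda>x. x \<in> {0<..<1}) (at_left (1::real))"
      by (intro eventually_at_left_real) auto
    then show "eventually (\<lambda>x. h x < b) (at_left 1)"
    proof (rule eventually_mono)
      fix x assume "x \<in> {0<..<(1::real)}"
      then have "h x \<le> L" unfolding L_def using bdd by (intro cSUP_upper) auto
      then show "h x < b" using \<open>L < b\<close> by simp
    qed
  qed
  have "kappa_lly V H u v = Lim (at_left 1) h"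
    by (simp add: kappa_lly_def h_def[abs_def])
  also have "\<dots> = L" using lim by (intro tendsto_Lim) auto
  finally show ?thesis using L0 by simp
qed

end

context htree begin

abbreviation L where "L \<equiv> leaves V T"
abbreviation Hh where "Hh \<equiv> halin_adj V T rot"

lemma leaves_V: "l \<in> L \<Longrightarrow> l \<in> V" by (simp add: leaves_def)

lemma x_nonleaf: "3 \<le> card (nbrs T x) \<Longrightarrow> x \<notin> L"
  by (simp add: leaves_def deg_def)

lemma leafy_comp:
  assumes xz: "T x z" and big: "2 \<le> card (tcomp V T x z \<inter> L)"
    and l: "l \<in> tcomp V T x z" "l \<in> L" and lp: "T l p"
  shows "p \<noteq> x \<and> p \<in> tcomp V T x z \<and> p \<notin> L"
proof -
  have px: "p \<noteq> x"
  proof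
    assume "p = x"
    then have "T x l" using symT[OF lp] by simp
    then have "l = z" using comp_eq_root[OF xz _ l(1)] by simp
    then have "nbrs T z = {x}" using deg_leaf[OF l(2)] lp \<open>p = x\<close> by simp
    then have "tcomp V T x z = {z}" using leaf_comp[OF xz] by simp
    then have "card (tcomp V T x z \<inter> L) \<le> 1" using card_mono[of "{z}" "{z} \<inter> L"] by simp
    then show False using big by simp
  qed
  moreover have "p \<in> tcomp V T x z" using comp_closed[OF l(1) lp px] .
  moreover have "p \<notin> L" using leaf_nbr_nonleaf[OF l(2) lp] .
  ultimately show ?thesis by blast
qed

lemma comp_has_leaf:
  assumes xz: "T x z" and x3: "3 \<le> card (nbrs T x)"
  shows "1 \<le> card (tcomp V T x z \<inter> L)"
proof -
  obtain K where E: "ETP x z K" using ET[OF xz] by blast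
  then obtain j where j: "j \<le> K" "snd ((fn ^^ j) (x,z)) \<in> L" by (auto simp: ETP_def)
  then have "snd ((fn ^^ j) (x,z)) \<in> tcomp V T x z \<union> {x}" using E by (auto simp: ETP_def)
  then have "snd ((fn ^^ j) (x,z)) \<in> tcomp V T x z \<inter> L" using j x_nonleaf[OF x3] by auto
  moreover have "finite (tcomp V T x z \<inter> L)" using fin_comp by blast
  ultimately show ?thesis by (metis One_nat_def Suc_leI card_gt_0_iff empty_iff)
qed

lemma Hh_sym: "Hh a b \<Longrightarrow> Hh b a"
  unfolding halin_adj_def using symT by blast

lemma Hh_sub: "Hh a b \<Longrightarrow> a \<in> V \<and> b \<in> V"
  unfolding halin_adj_def cyc_adj_def using inV leaves_V by blast

lemma Hh_conn: "a \<in> V \<Longrightarrow> b \<in> V \<Longrightarrow> Hh\<^sup>*\<^sup>* a b"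
proof -
  assume "a \<in> V" "b \<in> V"
  then have "T\<^sup>*\<^sup>* a b" by (rule conn)
  moreover have "\<And>p q. T p q \<Longrightarrow> Hh p q" by (simp add: halin_adj_def)
  ultimately show ?thesis by (metis mono_rtranclp)
qed

lemma core:
  assumes xV: "x \<in> V" and x3: "3 \<le> card (nbrs T x)" and xy: "T x y"
    and big1: "2 \<le> card (tcomp V T x y \<inter> L)"
    and big2: "2 \<le> card (tcomp V T x (rot x y) \<inter> L)"
    and pos: "\<forall>u v. Hh u v \<longrightarrow> kappa_lly V Hh u v > 0"
  shows False
proof -
  define y' where "y' = rot x y"
  define y'' where "y'' = rot x y'"
  have xy': "T x y'" unfolding y'_def using rot_in[OF xy] .
  have xy'': "T x y''" unfolding y''_def using rot_in[OF xy'] .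
  have c2: "2 \<le> card (nbrs T x)" using x3 by simp
  have yy': "y \<noteq> y'" unfolding y'_def using rot_nofix[OF xy c2] by simp
  have y'y'': "y' \<noteq> y''" unfolding y''_def using rot_nofix[OF xy' c2] by simp
  have yy'': "y \<noteq> y''" unfolding y''_def y'_def using rot_nofix2[OF xy x3] by simp
  define A1 where "A1 = tcomp V T x y"
  define A2 where "A2 = tcomp V T x y'"
  define A3 where "A3 = tcomp V T x y''"
  have d12: "A1 \<inter> A2 = {}" unfolding A1_def A2_def using comp_disj[OF xy xy' yy'] .
  have d13: "A1 \<inter> A3 = {}" unfolding A1_def A3_def using comp_disj[OF xy xy'' yy''] .
  have xA: "x \<notin> A1" "x \<notin> A2" "x \<notin> A3" unfolding A1_def A2_def A3_def by (auto simp: tcomp_mem)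
  have xL: "x \<notin> L" using x_nonleaf[OF x3] .
  have big2': "2 \<le> card (A2 \<inter> L)" using big2 by (simp add: A2_def y'_def)
  have big1': "2 \<le> card (A1 \<inter> L)" using big1 by (simp add: A1_def)
  obtain K1 where E1: "ETP x y K1" using ET[OF xy] by blast
  obtain K2 where E2: "ETP x y' K2" using ET[OF xy'] by blast
  obtain K3 where E3: "ETP x y'' K3" using ET[OF xy''] by blast
  define Ob where "Ob j = (fn ^^ j) (x,y)" for j
  define B2 where "B2 = Suc K1"
  define B3 where "B3 = Suc (B2 + K2)"
  have d0: "dart (x,y)" using xy by (simp add: dart_def)
  have OK1: "Ob K1 = (y,x)" using E1 by (simp add: Ob_def ETP_def)
  have OB2: "Ob (j + B2) = (fn ^^ j) (x,y')" for j
  proof -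
    have "Ob B2 = (x,y')" using OK1 by (simp add: Ob_def B2_def fn_simp y'_def)
    then show ?thesis by (simp add: Ob_def fnp_add)
  qed
  have OB3: "Ob (j + B3) = (fn ^^ j) (x,y'')" for j
  proof -
    have "Ob (K2 + B2) = (y',x)" using OB2[of K2] E2 by (simp add: ETP_def)
    then have "Ob B3 = (x,y'')" by (simp add: Ob_def B3_def fn_simp y''_def add.commute)
    then show ?thesis by (simp add: Ob_def fnp_add)
  qed
  have loc1: "snd (Ob j) \<in> A1" if "j \<le> K1" "snd (Ob j) \<in> L" for j
  proof -
    have "\<forall>j\<le>K1. snd ((fn ^^ j) (x,y)) \<in> tcomp V T x y \<union> {x}" using E1 unfolding ETP_def by blast
    then have "snd (Ob j) \<in> A1 \<union> {x}" using that(1) unfolding Ob_def A1_def by blast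
    then show ?thesis using that(2) xL by auto
  qed
  have loc2: "snd (Ob (i + B2)) \<in> A2" if "i \<le> K2" "snd (Ob (i + B2)) \<in> L" for i
  proof -
    have "\<forall>j\<le>K2. snd ((fn ^^ j) (x,y')) \<in> tcomp V T x y' \<union> {x}" using E2 unfolding ETP_def by blast
    then have "snd (Ob (i + B2)) \<in> A2 \<union> {x}" using that(1) unfolding OB2 A2_def by blast
    then show ?thesis using that(2) xL by auto
  qed
  have loc3: "snd (Ob (i + B3)) \<in> A3" if "i \<le> K3" "snd (Ob (i + B3)) \<in> L" for i
  proof -
    have "\<forall>j\<le>K3. snd ((fn ^^ j) (x,y'')) \<in> tcomp V T x y'' \<union> {x}" using E3 unfolding ETP_def by blast
    then have "snd (Ob (i + B3)) \<in> A3 \<union> {x}" using that(1) unfolding OB3 A3_def by blast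
    then show ?thesis using that(2) xL by auto
  qed
  define P1 where "P1 = {j. j \<le> K1 \<and> snd (Ob j) \<in> L}"
  define P2 where "P2 = {i. i \<le> K2 \<and> snd (Ob (i + B2)) \<in> L}"
  have fP1: "finite P1" unfolding P1_def by simp
  have fP2: "finite P2" unfolding P2_def by simp
  have "A1 \<inter> L \<subseteq> (\<lambda>j. snd (Ob j)) ` P1"
  proof
    fix l assume l: "l \<in> A1 \<inter> L"
    have "\<forall>l\<in>tcomp V T x y \<inter> L. \<exists>j\<le>K1. snd ((fn ^^ j) (x,y)) = l" using E1 unfolding ETP_def by blast
    then obtain j where "j \<le> K1" "snd (Ob j) = l" using l unfolding A1_def Ob_def by blast
    then show "l \<in> (\<lambda>j. snd (Ob j)) ` P1" using l unfolding P1_def by auto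
  qed
  then have "card (A1 \<inter> L) \<le> card ((\<lambda>j. snd (Ob j)) ` P1)" using fP1 by (intro card_mono) auto
  also have "\<dots> \<le> card P1" using fP1 by (rule card_image_le)
  finally have "card (A1 \<inter> L) \<le> card P1" .
  then have cP1: "2 \<le> card P1" using big1' by simp
  have "A2 \<inter> L \<subseteq> (\<lambda>i. snd (Ob (i + B2))) ` P2"
  proof
    fix l assume l: "l \<in> A2 \<inter> L"
    have "\<forall>l\<in>tcomp V T x y' \<inter> L. \<exists>j\<le>K2. snd ((fn ^^ j) (x,y')) = l" using E2 unfolding ETP_def by blast
    then obtain j where "j \<le> K2" "snd (Ob (j + B2)) = l" using l unfolding A2_def OB2 by blast
    then show "l \<in> (\<lambda>i. snd (Ob (i + B2))) ` P2" using l unfolding P2_def by auto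
  qed
  then have "card (A2 \<inter> L) \<le> card ((\<lambda>i. snd (Ob (i + B2))) ` P2)" using fP2 by (intro card_mono) auto
  also have "\<dots> \<le> card P2" using fP2 by (rule card_image_le)
  finally have "card (A2 \<inter> L) \<le> card P2" .
  then have cP2: "2 \<le> card P2" using big2' by simp
  define j2 where "j2 = Max P1"
  have P1ne: "P1 \<noteq> {}" using cP1 by auto
  have j2P: "j2 \<in> P1" unfolding j2_def using fP1 P1ne by simp
  have P1ne': "P1 - {j2} \<noteq> {}"
  proof
    assume "P1 - {j2} = {}"
    then have "P1 \<subseteq> {j2}" by blast
    then have "card P1 \<le> 1" using card_mono[of "{j2}" P1] by simp
    then show False using cP1 by simp
  qed
  define j1 where "j1 = Max (P1 - {j2})"
  have j1P: "j1 \<in> P1 - {j2}" unfolding j1_def by (rule Max_in) (use fP1 P1ne' in auto)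
  have j12: "j1 < j2" using j1P fP1 j2_def by (metis DiffD1 DiffD2 Max_ge le_neq_implies_less singletonI)
  have j1max: "j \<in> P1 \<Longrightarrow> j \<noteq> j2 \<Longrightarrow> j \<le> j1" for j unfolding j1_def using fP1 by simp
  have j2max: "j \<in> P1 \<Longrightarrow> j \<le> j2" for j unfolding j2_def using fP1 by simp
  define m1 where "m1 = Min P2"
  have P2ne: "P2 \<noteq> {}" using cP2 by auto
  have m1P: "m1 \<in> P2" unfolding m1_def using fP2 P2ne by simp
  have P2ne': "P2 - {m1} \<noteq> {}"
  proof
    assume "P2 - {m1} = {}"
    then have "P2 \<subseteq> {m1}" by blast
    then have "card P2 \<le> 1" using card_mono[of "{m1}" P2] by simp
    then show False using cP2 by simp
  qed
  define m2 where "m2 = Min (P2 - {m1})"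
  have m2P: "m2 \<in> P2 - {m1}" unfolding m2_def by (rule Min_in) (use fP2 P2ne' in auto)
  have m12: "m1 < m2" using m2P fP2 m1_def by (metis DiffD1 DiffD2 Min_le le_neq_implies_less singletonI)
  have m1min: "i \<in> P2 \<Longrightarrow> m1 \<le> i" for i unfolding m1_def using fP2 by simp
  have m2min: "i \<in> P2 \<Longrightarrow> i \<noteq> m1 \<Longrightarrow> m2 \<le> i" for i unfolding m2_def using fP2 by simp
  define u' where "u' = snd (Ob j1)"
  define u where "u = snd (Ob j2)"
  define v where "v = snd (Ob (m1 + B2))"
  define v' where "v' = snd (Ob (m2 + B2))"
  have u'L: "u' \<in> L" "u' \<in> A1" using j1P loc1 unfolding P1_def u'_def by auto
  have uL: "u \<in> L" "u \<in> A1" using j2P loc1 unfolding P1_def u_def by auto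
  have vL: "v \<in> L" "v \<in> A2" using m1P loc2 unfolding P2_def v_def by auto
  have v'L: "v' \<in> L" "v' \<in> A2" using m2P loc2 unfolding P2_def v'_def by auto
  have c1: "cyc_adj V T rot u' u"
    unfolding u'_def u_def Ob_def
  proof (rule next_leaf[OF d0 j12])
    show "snd ((fn ^^ j1) (x,y)) \<in> L" using u'L u'_def Ob_def by simp
    show "snd ((fn ^^ j2) (x,y)) \<in> L" using uL u_def Ob_def by simp
    fix j assume j: "j1 < j" "j < j2"
    show "snd ((fn ^^ j) (x,y)) \<notin> L"
    proof
      assume "snd ((fn ^^ j) (x,y)) \<in> L"
      moreover have "j \<le> K1" using j j2P P1_def by auto
      ultimately have "j \<in> P1" unfolding P1_def Ob_def by simp
      then show False using j1max j by fastforce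
    qed
  qed
  have c2': "cyc_adj V T rot u v"
    unfolding u_def v_def Ob_def
  proof (rule next_leaf[OF d0])
    show "j2 < m1 + B2" using j2P P1_def B2_def by auto
    show "snd ((fn ^^ j2) (x,y)) \<in> L" using uL u_def Ob_def by simp
    show "snd ((fn ^^ (m1 + B2)) (x,y)) \<in> L" using vL v_def Ob_def by simp
    fix j assume j: "j2 < j" "j < m1 + B2"
    show "snd ((fn ^^ j) (x,y)) \<notin> L"
    proof
      assume jl: "snd ((fn ^^ j) (x,y)) \<in> L"
      show False
      proof (cases "j \<le> K1")
        case True
        then have "j \<in> P1" using jl unfolding P1_def Ob_def by simp
        then show False using j2max j by fastforce
      next
        case False
        then have jj: "j = (j - B2) + B2" by (simp add: B2_def)
        have "j - B2 < m1" using j False B2_def by linarith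
        moreover have "m1 \<le> K2" using m1P P2_def by simp
        ultimately have "j - B2 \<le> K2" by linarith
        moreover have "snd (Ob ((j - B2) + B2)) \<in> L" using jl by (simp add: Ob_def jj[symmetric])
        ultimately have "j - B2 \<in> P2" unfolding P2_def by simp
        then show False using m1min \<open>j - B2 < m1\<close> by fastforce
      qed
    qed
  qed
  have c3: "cyc_adj V T rot v v'"
    unfolding v_def v'_def Ob_def
  proof (rule next_leaf[OF d0])
    show "m1 + B2 < m2 + B2" using m12 by simp
    show "snd ((fn ^^ (m1 + B2)) (x,y)) \<in> L" using vL v_def Ob_def by simp
    show "snd ((fn ^^ (m2 + B2)) (x,y)) \<in> L" using v'L v'_def Ob_def by simp
    fix j assume j: "m1 + B2 < j" "j < m2 + B2"
    show "snd ((fn ^^ j) (x,y)) \<notin> L"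
    proof
      assume jl: "snd ((fn ^^ j) (x,y)) \<in> L"
      have jj: "j = (j - B2) + B2" using j by simp
      have "m2 \<le> K2" using m2P P2_def by simp
      then have "j - B2 \<le> K2" using j by linarith
      moreover have "snd (Ob ((j - B2) + B2)) \<in> L" using jl by (simp add: Ob_def jj[symmetric])
      ultimately have "j - B2 \<in> P2" unfolding P2_def by simp
      moreover have "j - B2 \<noteq> m1" "j - B2 < m2" using j by auto
      ultimately show False using m2min by fastforce
    qed
  qed
  obtain r where r: "r \<le> K3" "snd ((fn ^^ r) (x,y'')) \<in> L" using E3 by (auto simp: ETP_def)
  define tn where "tn = (LEAST t. m2 + B2 < t \<and> snd (Ob t) \<in> L)"
  have exr: "m2 + B2 < r + B3 \<and> snd (Ob (r + B3)) \<in> L"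
    using r OB3 m2P P2_def B3_def by auto
  have tnP: "m2 + B2 < tn \<and> snd (Ob tn) \<in> L" unfolding tn_def using exr by (rule LeastI)
  have tnle: "tn \<le> r + B3" unfolding tn_def using exr by (rule Least_le)
  define w where "w = snd (Ob tn)"
  have c4: "cyc_adj V T rot v' w"
    unfolding v'_def w_def Ob_def
  proof (rule next_leaf[OF d0])
    show "m2 + B2 < tn" using tnP by simp
    show "snd ((fn ^^ (m2 + B2)) (x,y)) \<in> L" using v'L v'_def Ob_def by simp
    show "snd ((fn ^^ tn) (x,y)) \<in> L" using tnP Ob_def by simp
    fix j assume j: "m2 + B2 < j" "j < tn"
    show "snd ((fn ^^ j) (x,y)) \<notin> L"
    proof -
      have "\<not> (m2 + B2 < j \<and> snd (Ob j) \<in> L)"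
        by (rule not_less_Least[of j "\<lambda>t. m2 + B2 < t \<and> snd (Ob t) \<in> L"]) (use j(2) tn_def in simp)
      then show ?thesis using j(1) by (simp add: Ob_def)
    qed
  qed
  have wloc: "w \<in> A2 \<union> A3"
  proof (cases "tn \<le> K2 + B2")
    case True
    have "tn = (tn - B2) + B2" using tnP by simp
    then have "snd (Ob ((tn - B2) + B2)) \<in> A2" using loc2[of "tn - B2"] True tnP by simp
    then show ?thesis using \<open>tn = (tn - B2) + B2\<close> w_def by simp
  next
    case False
    then have "tn = (tn - B3) + B3" "tn - B3 \<le> K3" using tnle r B3_def by auto
    then have "snd (Ob ((tn - B3) + B3)) \<in> A3" using loc3[of "tn - B3"] tnP by simp
    then show ?thesis using \<open>tn = (tn - B3) + B3\<close> w_def by simp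
  qed
  define pu where "pu = fst (Ob j2)"
  define pv where "pv = fst (Ob (m1 + B2))"
  have "dart (Ob j2)" unfolding Ob_def using fnp_dart d0 by blast
  then have "T pu u" unfolding pu_def u_def dart_def .
  then have upu: "T u pu" by (rule symT)
  have "dart (Ob (m1 + B2))" unfolding Ob_def using fnp_dart d0 by blast
  then have "T pv v" unfolding pv_def v_def dart_def .
  then have vpv: "T v pv" by (rule symT)
  have pu: "pu \<noteq> x" "pu \<in> A1" "pu \<notin> L" using leafy_comp[OF xy big1 _ _ upu] uL unfolding A1_def by auto
  have pv: "pv \<noteq> x" "pv \<in> A2" "pv \<notin> L" using leafy_comp[OF xy' _ _ _ vpv] big2' vL unfolding A2_def by auto
  have uv: "u \<noteq> v" using uL vL d12 by blast
  have succ_u: "cyc_adj V T rot u a \<longleftrightarrow> a = v" for a using succ_unique c2' by blast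
  have pred_u: "cyc_adj V T rot a u \<longleftrightarrow> a = u'" for a using pred_unique c1 by blast
  have succ_v: "cyc_adj V T rot v a \<longleftrightarrow> a = v'" for a using succ_unique c3 by blast
  have pred_v: "cyc_adj V T rot a v \<longleftrightarrow> a = u" for a using pred_unique c2' by blast
  have Tu: "T u a \<longleftrightarrow> a = pu" for a using deg_leaf[OF uL(1) upu] by (auto simp: nbrs_iff[symmetric])
  have Tv: "T v a \<longleftrightarrow> a = pv" for a using deg_leaf[OF vL(1) vpv] by (auto simp: nbrs_iff[symmetric])
  have Nu: "nbrs Hh u = {pu, v, u'}" by (auto simp: nbrs_def halin_adj_def Tu succ_u pred_u)
  have Nv: "nbrs Hh v = {pv, v', u}" by (auto simp: nbrs_def halin_adj_def Tv succ_v pred_v)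
  have uu': "u' \<noteq> u" using c1 succ_u uv by auto
  have vv': "v' \<noteq> v" using c3 pred_v uv by auto
  have "pu \<noteq> v" "pu \<noteq> u'" "v \<noteq> u'" using pu uL vL u'L d12 by auto
  then have du: "deg Hh u = 3" using Nu by (simp add: deg_def)
  have "pv \<noteq> v'" "pv \<noteq> u" "v' \<noteq> u" using pv v'L uL d12 by auto
  then have dv: "deg Hh v = 3" using Nv by (simp add: deg_def)
  have nuu: "\<not> Hh u u" using irrT Tu succ_u pred_u uu' uv unfolding halin_adj_def by auto
  have nvv: "\<not> Hh v v" using irrT Tv succ_v pred_v vv' uv unfolding halin_adj_def by auto
  have Huv: "Hh u v" unfolding halin_adj_def using c2' by simp
  have Hiff: "Hh a b \<longleftrightarrow> b \<in> nbrs Hh a" for a b by (simp add: nbrs_def)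
  have tri: "\<not> Hh v a" if "Hh u a" "a \<noteq> v" for a
  proof -
    have "a \<in> {pu, u'}" using that Nu Hiff by auto
    then have "a \<in> A1" "a \<noteq> u" using pu u'L uu' irrT[OF upu] by auto
    then show ?thesis using Nv Hiff pv v'L uL d12 by auto
  qed
  have sq: "a \<noteq> b \<and> \<not> Hh a b" if "Hh u a" "a \<noteq> v" "Hh v b" "b \<noteq> u" for a b
  proof -
    have a: "a \<in> {pu, u'}" using that Nu Hiff by auto
    have b: "b \<in> {pv, v'}" using that Nv Hiff by auto
    have aA: "a \<in> A1" using a pu u'L by auto
    have bA: "b \<in> A2" using b pv v'L by auto
    have "a \<noteq> b" using aA bA d12 by auto
    moreover have "\<not> T a b"
    proof
      assume "T a b"
      moreover have "b \<noteq> x" using bA xA by auto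
      ultimately have "b \<in> A1" using comp_closed aA unfolding A1_def by blast
      then show False using bA d12 by auto
    qed
    moreover have "\<not> cyc_adj V T rot a b"
    proof
      assume ab: "cyc_adj V T rot a b"
      then have "a \<in> L" unfolding cyc_adj_def by blast
      then have "a = u'" using a pu by auto
      then have "b = u" using succ_unique[OF ab] c1 by simp
      then show False using bA uL d12 by auto
    qed
    moreover have "\<not> cyc_adj V T rot b a"
    proof
      assume ba: "cyc_adj V T rot b a"
      then have "b \<in> L" unfolding cyc_adj_def by blast
      then have "b = v'" using b pv by auto
      then have "a = w" using succ_unique[OF ba] c4 by simp
      then show False using aA wloc d12 d13 by auto
    qed
    ultimately show ?thesis unfolding halin_adj_def by blast
  qed
  interpret C: curv V Hh u v
  proof
    show "finite V" by (rule finV)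
    show "u \<in> V" using uL leaves_V by blast
    show "v \<in> V" using vL leaves_V by blast
    show "u \<noteq> v" by (rule uv)
    show "Hh u v" by (rule Huv)
    show "\<And>a b. Hh a b \<Longrightarrow> Hh b a" by (rule Hh_sym)
    show "\<And>a b. Hh a b \<Longrightarrow> a \<in> V \<and> b \<in> V" by (rule Hh_sub)
    show "\<And>a b. a \<in> V \<Longrightarrow> b \<in> V \<Longrightarrow> Hh\<^sup>*\<^sup>* a b" by (rule Hh_conn)
    show "\<not> Hh u u" by (rule nuu)
    show "\<not> Hh v v" by (rule nvv)
    show "3 \<le> deg Hh u" using du by simp
    show "3 \<le> deg Hh v" using dv by simp
    show "\<And>a. Hh u a \<Longrightarrow> a \<noteq> v \<Longrightarrow> \<not> Hh v a" by (rule tri)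
    show "\<And>a b. Hh u a \<Longrightarrow> a \<noteq> v \<Longrightarrow> Hh v b \<Longrightarrow> b \<noteq> u \<Longrightarrow> a \<noteq> b \<and> \<not> Hh a b" by (rule sq)
  qed
  have "kappa_lly V Hh u v \<le> 0" by (rule C.kappa_nonpos)
  moreover have "kappa_lly V Hh u v > 0" using pos Huv by blast
  ultimately show False by simp
qed

end

theorem lemma3p1:
  fixes V :: "'a set" and T :: "'a \<Rightarrow> 'a \<Rightarrow> bool" and rot :: "'a \<Rightarrow> 'a \<Rightarrow> 'a"
    and x y :: 'a
  assumes halin: "gen_halin V T rot"
    and pos: "\<forall>u v. halin_adj V T rot u v \<longrightarrow> kappa_lly V (halin_adj V T rot) u v > 0"
    and xV: "x \<in> V" and xmax: "deg T x = max_deg V T"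
    and xy: "T x y"
    and big: "2 \<le> card (tcomp V T x y \<inter> leaves V T)"
  shows "card (tcomp V T x (rot x y) \<inter> leaves V T) = 1 \<and>
         (\<forall>w. T x w \<and> rot x w = y \<longrightarrow> card (tcomp V T x w \<inter> leaves V T) = 1)"
proof -
  interpret htree V T rot
    using halin by unfold_locales (auto simp: gen_halin_def)
  have x3: "3 \<le> card (nbrs T x)" using xmax md by (simp add: deg_def)
  have xy': "T x (rot x y)" using rot_in[OF xy] .
  have A: "card (tcomp V T x (rot x y) \<inter> leaves V T) = 1"
  proof -
    have "1 \<le> card (tcomp V T x (rot x y) \<inter> leaves V T)" using comp_has_leaf[OF xy' x3] .
    moreover have "\<not> 2 \<le> card (tcomp V T x (rot x y) \<inter> leaves V T)"
      using core[OF xV x3 xy big _ pos] by blast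
    ultimately show ?thesis by linarith
  qed
  have B: "card (tcomp V T x w \<inter> leaves V T) = 1" if w: "T x w" "rot x w = y" for w
  proof -
    have "1 \<le> card (tcomp V T x w \<inter> leaves V T)" using comp_has_leaf[OF w(1) x3] .
    moreover have "\<not> 2 \<le> card (tcomp V T x w \<inter> leaves V T)"
      using core[OF xV x3 w(1) _ _ pos] big w(2) by blast
    ultimately show ?thesis by linarith
  qed
  show ?thesis using A B by blast
qed

end
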